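(* Let $\tau$ be the semicircle law, and let $K(f)=-\mathscr{J}^*(\mathscr{J}f)-f$. Let $g\in\mathscr{A}$ be cyclically symmetric and $f=\mathscr{D}g$. Then $$K(f)=\mathscr{D}\Big\{(1\otimes\tau+\tau\otimes1)\Big(\sum_i[\mathscr{J}f]_{ii}\Big)-f\#X\Big\}=\mathscr{D}\Big\{(1\otimes\tau+\tau\otimes1)\big(Tr[\mathscr{J}\mathscr{D}g]\big)-\mathscr{N}g\Big\}.$$
   Context: $\mathscr{A}=\mathbb{C}\langle X_1,\dots,X_n\rangle$. A polynomial is cyclically symmetric if for all $i_1,\dots,i_k$ the coefficient of $X_{i_1}\cdots X_{i_k}$ equals that of $X_{i_k}X_{i_1}\cdots X_{i_{k-1}}$. $\mathscr{N}$ multiplies each monomial of degree $k$ by $k$. $\partial_j$: derivation $\mathscr{A}\to\mathscr{A}\otimes\mathscr{A}^{op}$ with $\partial_jX_i=\delta_{ij}1\otimes1$; $\mathscr{D}_jq=\sum_{q=BX_jC}CB$; $\mathscr{D}g=(\mathscr{D}_jg)_j$; $\mathscr{J}f=(\partial_jf_i)_{i,j}$; $Tr(q)=\sum_iq_{ii}$; $g\#h=\sum_ig_ih_i$ for vectors; $(1\otimes\tau+\tau\otimes1)(a\otimes b)=a\tau(b)+\tau(a)b$. The semicircle law $\tau$ is the law of a free semicircular family $S_1,\dots,S_n$ (each with semicircle distribution on $[-2,2]$ of variance 1). $\partial_j^*$ is the adjoint of $\partial_j$ as a densely defined operator $L^2(\tau)\to L^2(\tau\otimes\tau)$, and $\mathscr{J}^*q=(\sum_i\partial_i^*(q_{ji}))_j$;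 for the semicircle law $\partial_j^*(1\otimes1)=X_j$. *)

theory Defs
  imports Complex_Main "HOL-Library.Poly_Mapping"
begin

text \<open>Noncommutative polynomials in variables X_0, X_1, ... : finitely supported
  coefficient functions on words (nat lists). The word [i1,...,ik] stands for the
  monomial X_i1 ... X_ik.  Elements of A tensor A^op are finitely supported
  coefficient functions on pairs of words; (u,v) stands for the monomial u tensor v.\<close>

type_synonym ncpoly = "nat list \<Rightarrow>\<^sub>0 complex"
type_synonym nctens = "(nat list \<times> nat list) \<Rightarrow>\<^sub>0 complex"

definition ncpolys :: "nat \<Rightarrow> ncpoly set" where
  "ncpolys n = {p. \<forall>w\<in>Poly_Mapping.keys p. set w \<subseteq> {..<n}}"

definition ncvar :: "nat \<Rightarrow> ncpoly" where
  "ncvar i = Poly_Mapping.single [i] 1"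

definition ncmult :: "ncpoly \<Rightarrow> ncpoly \<Rightarrow> ncpoly" where
  "ncmult p q = (\<Sum>u\<in>Poly_Mapping.keys p. \<Sum>v\<in>Poly_Mapping.keys q.
      Poly_Mapping.single (u @ v) (Poly_Mapping.lookup p u * Poly_Mapping.lookup q v))"

definition ncstar :: "ncpoly \<Rightarrow> ncpoly" where
  "ncstar p = (\<Sum>w\<in>Poly_Mapping.keys p. Poly_Mapping.single (rev w) (cnj (Poly_Mapping.lookup p w)))"

definition cyc_symm :: "ncpoly \<Rightarrow> bool" where
  "cyc_symm g = (\<forall>w. w \<noteq> [] \<longrightarrow> Poly_Mapping.lookup g w = Poly_Mapping.lookup g (last w # butlast w))"

definition ncN :: "ncpoly \<Rightarrow> ncpoly" where
  "ncN p = (\<Sum>w\<in>Poly_Mapping.keys p. Poly_Mapping.single w (of_nat (length w) * Poly_Mapping.lookup p w))"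

definition ncpartial :: "nat \<Rightarrow> ncpoly \<Rightarrow> nctens" where
  "ncpartial j p = (\<Sum>w\<in>Poly_Mapping.keys p. \<Sum>k<length w.
      if w ! k = j then Poly_Mapping.single (take k w, drop (Suc k) w) (Poly_Mapping.lookup p w) else 0)"

definition ncD :: "nat \<Rightarrow> ncpoly \<Rightarrow> ncpoly" where
  "ncD j p = (\<Sum>w\<in>Poly_Mapping.keys p. \<Sum>k<length w.
      if w ! k = j then Poly_Mapping.single (drop (Suc k) w @ take k w) (Poly_Mapping.lookup p w) else 0)"

text \<open>Moments of a free semicircular family (variance 1): tau(X_i1...X_ik) is the
  number of non-crossing pair partitions of {1..k} pairing only equal indices,
  computed by pairing the first letter with a later occurrence of the same letter.\<close>
function sc_moment :: "nat list \<Rightarrow> nat" where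
  "sc_moment [] = 1"
| "sc_moment (i # w) = (\<Sum>k<length w.
      if w ! k = i then sc_moment (take k w) * sc_moment (drop (Suc k) w) else 0)"
  by pat_completeness auto
termination
  by (relation "measure length") auto

definition tau :: "ncpoly \<Rightarrow> complex" where
  "tau p = (\<Sum>w\<in>Poly_Mapping.keys p. Poly_Mapping.lookup p w * of_nat (sc_moment w))"

text \<open>L^2(tau) inner product (linear in the second argument).\<close>
definition inner_tau :: "ncpoly \<Rightarrow> ncpoly \<Rightarrow> complex" where
  "inner_tau p q = tau (ncmult (ncstar p) q)"

text \<open>L^2(tau tensor tau) inner product on A tensor A^op:
  <a tensor b, c tensor d> = tau(a* c) tau(b* d).\<close>
definition inner_tau2 :: "nctens \<Rightarrow> nctens \<Rightarrow> complex" where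
  "inner_tau2 \<xi> \<eta> = (\<Sum>(u,v)\<in>Poly_Mapping.keys \<xi>. \<Sum>(u',v')\<in>Poly_Mapping.keys \<eta>.
      cnj (Poly_Mapping.lookup \<xi> (u,v)) * Poly_Mapping.lookup \<eta> (u',v')
      * of_nat (sc_moment (rev u @ u')) * of_nat (sc_moment (rev v @ v')))"

definition partial_adj :: "nat \<Rightarrow> nat \<Rightarrow> nctens \<Rightarrow> ncpoly" where
  "partial_adj n j \<xi> = (THE p. p \<in> ncpolys n \<and>
      (\<forall>q\<in>ncpolys n. inner_tau2 (ncpartial j q) \<xi> = inner_tau q p))"

text \<open>(1 tensor tau + tau tensor 1)(a tensor b) = a tau(b) + tau(a) b.\<close>
definition tauE :: "nctens \<Rightarrow> ncpoly" where
  "tauE \<xi> = (\<Sum>(u,v)\<in>Poly_Mapping.keys \<xi>.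
      Poly_Mapping.single u (Poly_Mapping.lookup \<xi> (u,v) * of_nat (sc_moment v))
    + Poly_Mapping.single v (of_nat (sc_moment u) * Poly_Mapping.lookup \<xi> (u,v)))"

text \<open>Vectors of n polynomials are functions nat => ncpoly (entries i < n used).\<close>

definition ncJ :: "(nat \<Rightarrow> ncpoly) \<Rightarrow> nat \<Rightarrow> nat \<Rightarrow> nctens" where
  "ncJ f i j = ncpartial j (f i)"

definition ncJadj :: "nat \<Rightarrow> (nat \<Rightarrow> nat \<Rightarrow> nctens) \<Rightarrow> nat \<Rightarrow> ncpoly" where
  "ncJadj n q j = (\<Sum>i<n. partial_adj n i (q j i))"

definition ncK :: "nat \<Rightarrow> (nat \<Rightarrow> ncpoly) \<Rightarrow> nat \<Rightarrow> ncpoly" where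
  "ncK n f j = - ncJadj n (ncJ f) j - f j"

definition ncTr :: "nat \<Rightarrow> (nat \<Rightarrow> nat \<Rightarrow> nctens) \<Rightarrow> nctens" where
  "ncTr n q = (\<Sum>i<n. q i i)"

definition nchash :: "nat \<Rightarrow> (nat \<Rightarrow> ncpoly) \<Rightarrow> (nat \<Rightarrow> ncpoly) \<Rightarrow> ncpoly" where
  "nchash n g h = (\<Sum>i<n. ncmult (g i) (h i))"

end

theory Submission
  imports Defs
begin


abbreviation sg :: "'k \<Rightarrow> complex \<Rightarrow> 'k \<Rightarrow>\<^sub>0 complex" where "sg \<equiv> Poly_Mapping.single"
abbreviation lk :: "('k \<Rightarrow>\<^sub>0 complex) \<Rightarrow> 'k \<Rightarrow> complex" where "lk \<equiv> Poly_Mapping.lookup"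
abbreviation ks :: "('k \<Rightarrow>\<^sub>0 complex) \<Rightarrow> 'k set" where "ks \<equiv> Poly_Mapping.keys"

definition lin :: "('k \<Rightarrow> complex \<Rightarrow> 'b::comm_monoid_add) \<Rightarrow> ('k \<Rightarrow>\<^sub>0 complex) \<Rightarrow> 'b" where
  "lin F p = (\<Sum>w\<in>ks p. F w (lk p w))"

definition addi :: "('k \<Rightarrow> complex \<Rightarrow> 'b::ab_group_add) \<Rightarrow> bool" where
  "addi F \<longleftrightarrow> (\<forall>w a b. F w (a + b) = F w a + F w b)"

lemma addiI: "(\<And>w a b. F w (a + b) = F w a + F w b) \<Longrightarrow> addi F"
  unfolding addi_def by blast

lemma addiD: "addi F \<Longrightarrow> F w (a + b) = F w a + F w b"
  unfolding addi_def by blast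

lemma addi_zero: "addi F \<Longrightarrow> F w 0 = 0"
  using addiD[of F w 0 0] by simp

lemma lin_superset:
  assumes "addi F" "finite S" "ks p \<subseteq> S"
  shows "lin F p = (\<Sum>w\<in>S. F w (lk p w))"
  unfolding lin_def
  by (rule sum.mono_neutral_left) (use assms addi_zero in \<open>auto simp: in_keys_iff\<close>)

lemma lin_add:
  assumes "addi F" shows "lin F (p + q) = lin F p + lin F q"
proof -
  let ?S = "ks p \<union> ks q"
  have k: "ks (p + q) \<subseteq> ?S" by (rule keys_add)
  have "lin F (p + q) = (\<Sum>w\<in>?S. F w (lk (p+q) w))" by (rule lin_superset[OF assms _ k]) simp
  also have "\<dots> = (\<Sum>w\<in>?S. F w (lk p w)) + (\<Sum>w\<in>?S. F w (lk q w))"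
    by (simp add: lookup_add addiD[OF assms] sum.distrib)
  also have "\<dots> = lin F p + lin F q"
    by (subst (1 2) lin_superset[OF assms]) auto
  finally show ?thesis .
qed

lemma lin_zero[simp]: "lin F 0 = 0"
  by (simp add: lin_def)

lemma lin_uminus: assumes "addi F" shows "lin F (- p) = - lin F p"
proof -
  have "lin F (- p) + lin F p = 0" using lin_add[OF assms, of "-p" p] by simp
  thus ?thesis by (simp add: eq_neg_iff_add_eq_0)
qed

lemma lin_diff: assumes "addi F" shows "lin F (p - q) = lin F p - lin F q"
  using lin_add[OF assms, of p "-q"] lin_uminus[OF assms, of q] by simp

lemma lin_sum: assumes "addi F" shows "lin F (\<Sum>x\<in>S. f x) = (\<Sum>x\<in>S. lin F (f x))"
  by (induction S rule: infinite_finite_induct) (simp_all add: lin_add[OF assms])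

lemma lin_single: assumes "addi F" shows "lin F (sg w c) = F w c"
  by (cases "c = 0") (simp_all add: lin_def addi_zero[OF assms])

lemma lin_comp: assumes "addi G" shows "lin G (lin F p) = lin (\<lambda>w c. lin G (F w c)) p"
proof -
  have "lin G (lin F p) = (\<Sum>w\<in>ks p. lin G (F w (lk p w)))"
    by (simp only: lin_def[of F p] lin_sum[OF assms])
  also have "\<dots> = lin (\<lambda>w c. lin G (F w c)) p" by (simp only: lin_def[of "\<lambda>w c. lin G (F w c)"])
  finally show ?thesis .
qed

lemma addi_comp: assumes "addi G" "addi F" shows "addi (\<lambda>w c. lin G (F w c))"
  by (rule addiI) (simp add: addiD[OF assms(2)] lin_add[OF assms(1)])

lemma lin_cong: "(\<And>w c. w \<in> ks p \<Longrightarrow> F w c = F' w c) \<Longrightarrow> lin F p = lin F' p"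
  by (simp add: lin_def)

lemma lin_single_id: "lin (\<lambda>w c. sg w c) p = p"
proof (rule poly_mapping_eqI)
  fix z
  show "lk (lin (\<lambda>w c. sg w c) p) z = lk p z"
    by (auto simp: lin_def lookup_sum lookup_single when_def in_keys_iff sum.delta)
qed

lemma additive_sum:
  assumes "\<And>a b. L (a + b) = L a + L b" "L 0 = (0::'b::comm_monoid_add)"
  shows "L (\<Sum>x\<in>S. f x) = (\<Sum>x\<in>S. L (f x))"
  by (induction S rule: infinite_finite_induct) (simp_all add: assms)

lemma lin_expand:
  assumes "\<And>a b. L (a + b) = L a + L b" "L 0 = (0::'b::comm_monoid_add)"
  shows "L p = lin (\<lambda>w c. L (sg w c)) p"
proof -
  have "L p = L (lin (\<lambda>w c. sg w c) p)" by (simp add: lin_single_id)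
  also have "\<dots> = lin (\<lambda>w c. L (sg w c)) p"
    unfolding lin_def by (rule additive_sum[OF assms])
  finally show ?thesis .
qed



fun fk :: "nat list \<Rightarrow> nat list \<Rightarrow> nat" where
  "fk [] z = (if z = [] then 1 else 0)"
| "fk (i # w) z = (case z of [] \<Rightarrow> 0 | x # z' \<Rightarrow> if x = i then fk w z' else 0) + fk w (i # z)"

lemma fk_supp: "fk w z \<noteq> 0 \<Longrightarrow> length z \<le> length w \<and> set z \<subseteq> set w"
proof (induction w arbitrary: z)
  case Nil then show ?case by (simp split: if_splits)
next
  case (Cons i w)
  show ?case
  proof (cases "fk w (i # z) = 0")
    case True
    with Cons.prems have "(case z of [] \<Rightarrow> 0 | x # z' \<Rightarrow> if x = i then fk w z' else 0) \<noteq> 0" by simp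
    then obtain z' where z: "z = i # z'" "fk w z' \<noteq> 0" by (auto split: list.splits if_splits)
    with Cons.IH[of z'] show ?thesis by auto
  next
    case False
    with Cons.IH[of "i # z"] show ?thesis by auto
  qed
qed

lemma fk_short: "length w < length z \<Longrightarrow> fk w z = 0"
  using fk_supp by fastforce

lemma fk_top: "length z = length w \<Longrightarrow> fk w z = (if z = w then 1 else 0)"
proof (induction w arbitrary: z)
  case Nil then show ?case by simp
next
  case (Cons i w)
  then obtain x z' where z: "z = x # z'" by (cases z) auto
  have "fk w (i # z) = 0" by (rule fk_short) (use Cons.prems in simp)
  with Cons z show ?case by auto
qed

lemma dsum: "(\<Sum>k<L. \<Sum>m<k. h m k) = (\<Sum>m<L. \<Sum>k<L - Suc m. h m (Suc m + k)) "
  for h :: "nat \<Rightarrow> nat \<Rightarrow> 'a::comm_monoid_add"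
proof (induction L)
  case 0 then show ?case by simp
next
  case (Suc L)
  have "(\<Sum>m<Suc L. \<Sum>k<Suc L - Suc m. h m (Suc m + k)) = (\<Sum>m<L. \<Sum>k<Suc L - Suc m. h m (Suc m + k))"
    by simp
  also have "\<dots> = (\<Sum>m<L. (\<Sum>k<L - Suc m. h m (Suc m + k)) + h m L)"
  proof (rule sum.cong)
    fix m assume "m \<in> {..<L}"
    then have "Suc L - Suc m = Suc (L - Suc m)" by auto
    moreover have "Suc m + (L - Suc m) = L" using \<open>m \<in> {..<L}\<close> by auto
    ultimately show "(\<Sum>k<Suc L - Suc m. h m (Suc m + k)) = (\<Sum>k<L - Suc m. h m (Suc m + k)) + h m L"
      by simp
  qed simp
  finally show ?case using Suc by (simp add: sum.distrib)
qed

lemma fk_split: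
  "fk w (i # z) = (\<Sum>k<length w. if w!k = i then fk (take k w) [] * fk (drop (Suc k) w) z else 0)"
proof (induction w arbitrary: i z rule: length_induct)
  case (1 w)
  have IH: "\<And>u i z. length u < length w \<Longrightarrow> fk u (i#z) =
     (\<Sum>k<length u. if u!k = i then fk (take k u) [] * fk (drop (Suc k) u) z else 0)"
    using 1 by blast
  show ?case
  proof (cases w)
    case Nil then show ?thesis by simp
  next
    case (Cons x w')
    define T where "T = (\<lambda>m k. if w'!m = x \<and> w'!k = i then
        fk (take m w') [] * (fk (take (k - Suc m) (drop (Suc m) w')) [] * fk (drop (Suc k) w') z) else 0)"
    have "fk w' (x # i # z) = (\<Sum>m<length w'. if w'!m = x then fk (take m w') [] * fk (drop (Suc m) w') (i#z) else 0)"
      using IH[of w' x "i # z"] Cons by simp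
    also have "\<dots> = (\<Sum>m<length w'. \<Sum>k<length w' - Suc m. T m (Suc m + k))"
    proof (rule sum.cong)
      fix m assume m: "m \<in> {..<length w'}"
      have "fk (drop (Suc m) w') (i#z) = (\<Sum>k<length w' - Suc m. if w'!(Suc m + k) = i then
         fk (take k (drop (Suc m) w')) [] * fk (drop (Suc (Suc m + k)) w') z else 0)"
      proof -
        have dd: "\<And>k. drop (Suc k) (drop (Suc m) w') = drop (Suc (Suc m + k)) w'" by (simp add: add.commute)
        show ?thesis using IH[of "drop (Suc m) w'" i z] Cons by (simp only: dd) (simp add: add.commute)
      qed
      then show "(if w'!m = x then fk (take m w') [] * fk (drop (Suc m) w') (i#z) else 0) =
          (\<Sum>k<length w' - Suc m. T m (Suc m + k))"
        by (simp add: T_def sum_distrib_left if_distrib if_distribR cong: if_cong)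
    qed simp
    also have "\<dots> = (\<Sum>k<length w'. \<Sum>m<k. T m k)" by (rule dsum[symmetric])
    finally have A: "fk w' (x # i # z) = (\<Sum>k<length w'. \<Sum>m<k. T m k)" .
    have B: "(\<Sum>k<length w. if w!k = i then fk (take k w) [] * fk (drop (Suc k) w) z else 0)
       = (if x = i then fk w' z else 0) + (\<Sum>k<length w'. if w'!k = i then fk (x # take k w') [] * fk (drop (Suc k) w') z else 0)"
      unfolding Cons by (simp only: length_Cons sum.lessThan_Suc_shift) (simp cong: if_cong)
    have C: "(if w'!k = i then fk (x # take k w') [] * fk (drop (Suc k) w') z else 0) = (\<Sum>m<k. T m k)"
      if k: "k < length w'" for k
    proof -
      have "fk (x # take k w') [] = fk (take k w') [x]" by simp
      also have "\<dots> = (\<Sum>m<k. if w'!m = x then fk (take m w') [] * fk (drop (Suc m) (take k w')) [] else 0)"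
        using IH[of "take k w'" x "[]"] Cons k by (auto simp: min_def intro!: sum.cong)
      finally show ?thesis
        by (simp add: T_def sum_distrib_right drop_take if_distrib if_distribR mult.assoc cong: if_cong)
    qed
    show ?thesis using A B C Cons by simp
  qed
qed

lemma sc_fk: "sc_moment w = fk w []"
proof (induction w rule: length_induct)
  case (1 w)
  show ?case
  proof (cases w)
    case Nil then show ?thesis by simp
  next
    case (Cons i w')
    have "sc_moment w = (\<Sum>k<length w'. if w'!k = i then sc_moment (take k w') * sc_moment (drop (Suc k) w') else 0)"
      using Cons by simp
    also have "\<dots> = (\<Sum>k<length w'. if w'!k = i then fk (take k w') [] * fk (drop (Suc k) w') [] else 0)"
      by (rule sum.cong) (use 1 Cons in auto)
    also have "\<dots> = fk w' [i]" by (rule fk_split[symmetric])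
    finally show ?thesis using Cons by simp
  qed
qed

lemma shift_sum:
  fixes h g :: "nat list \<Rightarrow> nat"
  assumes A: "finite A" "i \<in> A" and Z: "Z = {z. set z \<subseteq> A \<and> length z \<le> N}"
    and hN: "\<And>z. length z = N \<Longrightarrow> h z = 0"
  shows "(\<Sum>z\<in>Z. h z * g (i # z)) = (\<Sum>z\<in>Z. (case z of [] \<Rightarrow> 0 | x # z' \<Rightarrow> if x = i then h z' else 0) * g z)"
proof -
  have fZ: "finite Z" unfolding Z by (rule finite_lists_length_le[OF A(1)])
  let ?S = "{z\<in>Z. length z < N}"
  have "(\<Sum>z\<in>Z. h z * g (i#z)) = (\<Sum>z\<in>?S. h z * g (i#z))"
    by (rule sum.mono_neutral_right) (use fZ hN in \<open>auto simp: Z\<close>)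
  also have "\<dots> = (\<Sum>y\<in>Cons i ` ?S. (case y of [] \<Rightarrow> 0 | x # z' \<Rightarrow> if x = i then h z' else 0) * g y)"
    by (subst sum.reindex) (auto simp: inj_on_def)
  also have "\<dots> = (\<Sum>z\<in>Z. (case z of [] \<Rightarrow> 0 | x # z' \<Rightarrow> if x = i then h z' else 0) * g z)"
  proof (rule sum.mono_neutral_left[OF fZ])
    show "Cons i ` ?S \<subseteq> Z" using A by (auto simp: Z)
    show "\<forall>y\<in>Z - Cons i ` ?S. (case y of [] \<Rightarrow> 0 | x # z' \<Rightarrow> if x = i then h z' else 0) * g y = 0"
    proof
      fix y assume y: "y \<in> Z - Cons i ` ?S"
      show "(case y of [] \<Rightarrow> 0 | x # z' \<Rightarrow> if x = i then h z' else 0) * g y = 0"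
      proof (cases y)
        case (Cons x z')
        show ?thesis
        proof (cases "x = i")
          case True
          with y Cons have "z' \<notin> ?S" by auto
          with y Cons have "length z' = N" by (auto simp: Z)
          with hN Cons True show ?thesis by simp
        qed (simp add: Cons)
      qed simp
    qed
  qed
  finally show ?thesis .
qed

lemma fk_inner:
  assumes "finite A" "set u \<subseteq> A" "set v \<subseteq> A" "length u + length v < N"
  shows "(\<Sum>z\<in>{z. set z \<subseteq> A \<and> length z \<le> N}. fk u z * fk v z) = fk (rev u @ v) []"
  using assms(2-4)
proof (induction u arbitrary: v)
  case Nil
  have "(\<Sum>z\<in>{z. set z \<subseteq> A \<and> length z \<le> N}. fk [] z * fk v z) =
        (\<Sum>z\<in>{z. set z \<subseteq> A \<and> length z \<le> N}. if z = [] then fk v z else 0)"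
    by (rule sum.cong) auto
  also have "\<dots> = fk v []" using finite_lists_length_le[OF assms(1)] by (simp add: sum.delta')
  finally show ?case by simp
next
  case (Cons i u)
  let ?Z = "{z. set z \<subseteq> A \<and> length z \<le> N}"
  have iA: "i \<in> A" using Cons by auto
  have h1: "fk u z = 0" if "length z = N" for z using Cons.prems that by (intro fk_short) auto
  have h2: "fk v z = 0" if "length z = N" for z using Cons.prems that by (intro fk_short) auto
  have "(\<Sum>z\<in>?Z. fk (i # u) z * fk v z) =
     (\<Sum>z\<in>?Z. (case z of [] \<Rightarrow> 0 | x # z' \<Rightarrow> if x = i then fk u z' else 0) * fk v z)
     + (\<Sum>z\<in>?Z. fk v z * fk u (i # z))"
    by (subst sum.distrib[symmetric], rule sum.cong) (simp_all add: algebra_simps)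
  also have "\<dots> = (\<Sum>z\<in>?Z. fk u z * fk v (i # z))
     + (\<Sum>z\<in>?Z. (case z of [] \<Rightarrow> 0 | x # z' \<Rightarrow> if x = i then fk v z' else 0) * fk u z)"
    using shift_sum[OF assms(1) iA refl h1, where g="fk v"] shift_sum[OF assms(1) iA refl h2, where g="fk u"]
    by simp
  also have "\<dots> = (\<Sum>z\<in>?Z. fk u z * fk (i # v) z)"
    by (simp add: distrib_left sum.distrib mult.commute)
  also have "\<dots> = fk (rev u @ i # v) []"
    using Cons.IH[of "i # v"] Cons.prems by simp
  finally show ?case by simp
qed

lemma sc_rev: "sc_moment (rev w) = sc_moment w"
proof -
  have "(\<Sum>z\<in>{z. set z \<subseteq> set w \<and> length z \<le> Suc (length w)}. fk w z * fk [] z) = fk (rev w @ []) []"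
    by (rule fk_inner) auto
  moreover have "(\<Sum>z\<in>{z. set z \<subseteq> set w \<and> length z \<le> Suc (length w)}. fk w z * fk [] z) = fk w []"
  proof -
    have "(\<Sum>z\<in>{z. set z \<subseteq> set w \<and> length z \<le> Suc (length w)}. fk w z * fk [] z) =
      (\<Sum>z\<in>{z. set z \<subseteq> set w \<and> length z \<le> Suc (length w)}. if z = [] then fk w z else 0)"
      by (rule sum.cong) auto
    also have "\<dots> = fk w []" using finite_lists_length_le[of "set w"] by (simp add: sum.delta')
    finally show ?thesis .
  qed
  ultimately show ?thesis by (simp add: sc_fk)
qed

lemma sc_snoc: "sc_moment (w @ [x]) = sc_moment (x # w)"
proof -
  let ?n = "length w"
  have "sc_moment (w @ [x]) = sc_moment (x # rev w)" by (subst sc_rev[symmetric]) simp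
  also have "\<dots> = (\<Sum>k<?n. if rev w ! k = x then sc_moment (take k (rev w)) * sc_moment (drop (Suc k) (rev w)) else 0)"
    by simp
  also have "\<dots> = (\<Sum>k<?n. (\<lambda>k. if w ! k = x then sc_moment (take k w) * sc_moment (drop (Suc k) w) else 0) (?n - Suc k))"
  proof (rule sum.cong)
    fix k assume k: "k \<in> {..<?n}"
    have t: "take k (rev w) = rev (drop (?n - k) w)" using k by (simp add: rev_drop)
    have d: "drop (Suc k) (rev w) = rev (take (?n - Suc k) w)" using k by (simp add: rev_take)
    have e: "Suc (?n - Suc k) = ?n - k" using k by auto
    show "(if rev w ! k = x then sc_moment (take k (rev w)) * sc_moment (drop (Suc k) (rev w)) else 0) =
      (\<lambda>k. if w ! k = x then sc_moment (take k w) * sc_moment (drop (Suc k) w) else 0) (?n - Suc k)"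
      using k by (simp add: t d e sc_rev rev_nth mult.commute)
  qed simp
  also have "\<dots> = sc_moment (x # w)"
    by (rule trans[OF sum.nat_diff_reindex[where g = "\<lambda>k. if w ! k = x then sc_moment (take k w) * sc_moment (drop (Suc k) w) else 0"]]) simp
  finally show ?thesis .
qed

lemma sc_cyc: "sc_moment (u @ v) = sc_moment (v @ u)"
proof (induction u arbitrary: v)
  case (Cons x u)
  have "sc_moment ((x # u) @ v) = sc_moment ((u @ v) @ [x])" by (simp only: sc_snoc append_Cons)
  also have "\<dots> = sc_moment (v @ x # u)" using Cons[of "v @ [x]"] by simp
  finally show ?case .
qed simp

lemma faithful:
  fixes S :: "nat list set" and c :: "nat list \<Rightarrow> complex"
  assumes fS: "finite S"
    and z0: "(\<Sum>u\<in>S. \<Sum>v\<in>S. cnj (c u) * c v * of_nat (sc_moment (rev u @ v))) = 0"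
  shows "\<forall>u\<in>S. c u = 0"
proof (rule ccontr)
  assume "\<not> (\<forall>u\<in>S. c u = 0)"
  then have Sne: "S \<noteq> {}" by auto
  define A where "A = \<Union>(set ` S)"
  define M where "M = Max (length ` S)"
  define N where "N = Suc (M + M)"
  define Z where "Z = {z. set z \<subseteq> A \<and> length z \<le> N}"
  have fA: "finite A" using fS by (simp add: A_def)
  have fZ: "finite Z" unfolding Z_def by (rule finite_lists_length_le[OF fA])
  have lenM: "length u \<le> M" if "u \<in> S" for u using that fS by (simp add: M_def)
  have scZ: "sc_moment (rev u @ v) = (\<Sum>z\<in>Z. fk u z * fk v z)" if "u \<in> S" "v \<in> S" for u v
    unfolding Z_def sc_fk
    by (rule fk_inner[symmetric, OF fA]) (use that lenM[of u] lenM[of v] in \<open>auto simp: A_def N_def\<close>)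
  define s where "s z = (\<Sum>v\<in>S. c v * of_nat (fk v z))" for z
  have "(\<Sum>u\<in>S. \<Sum>v\<in>S. cnj (c u) * c v * of_nat (sc_moment (rev u @ v)))
      = (\<Sum>u\<in>S. \<Sum>v\<in>S. \<Sum>z\<in>Z. (cnj (c u) * of_nat (fk u z)) * (c v * of_nat (fk v z)))"
    by (intro sum.cong refl) (simp add: scZ sum_distrib_left algebra_simps)
  also have "\<dots> = (\<Sum>z\<in>Z. \<Sum>u\<in>S. \<Sum>v\<in>S. (cnj (c u) * of_nat (fk u z)) * (c v * of_nat (fk v z)))"
  proof -
    have "\<And>u. (\<Sum>v\<in>S. \<Sum>z\<in>Z. (cnj (c u) * of_nat (fk u z)) * (c v * of_nat (fk v z))) =
      (\<Sum>z\<in>Z. \<Sum>v\<in>S. (cnj (c u) * of_nat (fk u z)) * (c v * of_nat (fk v z)))"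
      by (rule sum.swap)
    then show ?thesis by (simp only:) (rule sum.swap)
  qed
  also have "\<dots> = (\<Sum>z\<in>Z. cnj (s z) * s z)"
    by (simp add: s_def sum_product)
  also have "\<dots> = (\<Sum>z\<in>Z. complex_of_real ((cmod (s z))^2))"
    by (rule sum.cong) (simp_all only: complex_norm_square[symmetric] mult.commute[of "cnj _"])
  finally have "complex_of_real (\<Sum>z\<in>Z. (cmod (s z))^2) = 0" using z0 by simp
  then have "(\<Sum>z\<in>Z. (cmod (s z))^2) = 0" by (simp only: of_real_eq_0_iff)
  then have sz: "\<forall>z\<in>Z. s z = 0" using fZ by (simp add: sum_nonneg_eq_0_iff)
  define T where "T = {u\<in>S. c u \<noteq> 0}"
  have fT: "finite T" and Tne: "T \<noteq> {}" using fS \<open>\<not> (\<forall>u\<in>S. c u = 0)\<close> by (auto simp: T_def)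
  define M' where "M' = Max (length ` T)"
  have "M' \<in> length ` T" unfolding M'_def using fT Tne by (intro Max_in) auto
  then obtain u where uT: "u \<in> T" and lu: "length u = M'" by auto
  have geT: "length v \<le> length u" if "v \<in> T" for v using that fT lu by (simp add: M'_def)
  have "s u = (\<Sum>v\<in>S. if v = u then c v else 0)"
    unfolding s_def
  proof (rule sum.cong)
    fix v assume vS: "v \<in> S"
    show "c v * of_nat (fk v u) = (if v = u then c v else 0)"
    proof (cases "c v = 0")
      case False
      then have "v \<in> T" using vS by (simp add: T_def)
      then have "length v \<le> length u" by (rule geT)
      then show ?thesis
        by (cases "length v = length u") (auto simp: fk_top fk_short)
    qed auto
  qed simp
  also have "\<dots> = c u" using uT fS by (simp add: T_def)
  finally have "s u = c u" .
  moreover have "u \<in> Z" using uT lenM[of u] by (auto simp: Z_def A_def N_def T_def)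
  ultimately have "c u = 0" using sz by simp
  with uT show False by (simp add: T_def)
qed



definition cutw :: "nat list \<Rightarrow> nat \<Rightarrow> nat list" where
  "cutw w k = drop (Suc k) w @ take k w"

definition Dw :: "nat \<Rightarrow> nat list \<Rightarrow> complex \<Rightarrow> ncpoly" where
  "Dw j w c = (\<Sum>k<length w. if w!k = j then sg (cutw w k) c else 0)"

definition Pw :: "nat \<Rightarrow> nat list \<Rightarrow> complex \<Rightarrow> nctens" where
  "Pw j w c = (\<Sum>k<length w. if w!k = j then sg (take k w, drop (Suc k) w) c else 0)"

definition tEw :: "nat list \<times> nat list \<Rightarrow> complex \<Rightarrow> ncpoly" where
  "tEw x c = (case x of (u, v) \<Rightarrow> sg u (c * of_nat (sc_moment v)) + sg v (of_nat (sc_moment u) * c))"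

definition Nw :: "nat list \<Rightarrow> complex \<Rightarrow> ncpoly" where
  "Nw w c = sg w (of_nat (length w) * c)"

definition ip2 :: "nat list \<times> nat list \<Rightarrow> complex \<Rightarrow> nat list \<times> nat list \<Rightarrow> complex \<Rightarrow> complex" where
  "ip2 x c y d = (case x of (u, v) \<Rightarrow> case y of (u', v') \<Rightarrow>
     cnj c * d * of_nat (sc_moment (rev u @ u')) * of_nat (sc_moment (rev v @ v')))"

definition ip1 :: "nat list \<Rightarrow> complex \<Rightarrow> nat list \<Rightarrow> complex \<Rightarrow> complex" where
  "ip1 u c v d = cnj c * d * of_nat (sc_moment (rev u @ v))"

lemma ncD_lin: "ncD j p = lin (Dw j) p"
  unfolding ncD_def lin_def Dw_def cutw_def ..

lemma ncpartial_lin: "ncpartial j p = lin (Pw j) p"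
  unfolding ncpartial_def lin_def Pw_def ..

lemma tauE_lin: "tauE x = lin tEw x"
  unfolding tauE_def lin_def tEw_def by (rule sum.cong) auto

lemma ncN_lin: "ncN p = lin Nw p"
  unfolding ncN_def lin_def Nw_def ..

lemma tau_lin: "tau p = lin (\<lambda>w c. c * of_nat (sc_moment w)) p"
  unfolding tau_def lin_def ..

lemma ncstar_lin: "ncstar p = lin (\<lambda>w c. sg (rev w) (cnj c)) p"
  unfolding ncstar_def lin_def ..

lemma ncmult_lin: "ncmult p q = lin (\<lambda>u c. lin (\<lambda>v d. sg (u @ v) (c * d)) q) p"
  unfolding ncmult_def lin_def ..

lemma lin_plus_fun: "lin (\<lambda>x c. F x c + G x c) p = lin F p + lin G p"
  unfolding lin_def by (simp add: sum.distrib)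

lemma inner_tau2_lin: "inner_tau2 x y = lin (\<lambda>a c. lin (ip2 a c) y) x"
  unfolding inner_tau2_def lin_def ip2_def by (simp add: case_prod_beta')

lemma addi_Dw: "addi (Dw j)"
  by (rule addiI) (simp add: Dw_def single_add sum.distrib[symmetric] if_distrib cong: if_cong)
lemma addi_Pw: "addi (Pw j)"
  by (rule addiI) (simp add: Pw_def single_add sum.distrib[symmetric] if_distrib cong: if_cong)
lemma addi_tEw: "addi tEw"
  by (rule addiI) (auto simp: tEw_def single_add algebra_simps split: prod.splits)
lemma addi_Nw: "addi Nw"
  by (rule addiI) (simp add: Nw_def single_add algebra_simps)
lemma addi_ip2: "addi (ip2 x c)"
  by (rule addiI) (auto simp: ip2_def algebra_simps split: prod.splits)
lemma addi_ip2': "addi (\<lambda>a c. lin (ip2 a c) y)"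
proof (rule addiI)
  fix w a b
  have "ip2 w (a + b) = (\<lambda>y d. ip2 w a y d + ip2 w b y d)"
    by (auto simp: ip2_def algebra_simps fun_eq_iff split: prod.splits)
  then show "lin (ip2 w (a + b)) y = lin (ip2 w a) y + lin (ip2 w b) y" by (simp add: lin_plus_fun)
qed
lemma addi_ip1: "addi (ip1 u c)"
  by (rule addiI) (simp add: ip1_def algebra_simps)
lemma addi_tau: "addi (\<lambda>w c. c * of_nat (sc_moment w))"
  by (rule addiI) (simp add: algebra_simps)
lemma addi_sg: "addi (\<lambda>w c. sg w c)"
  by (rule addiI) (simp add: single_add)

lemma lin_swap: "lin (\<lambda>x c. lin (\<lambda>y d. H x c y d) q) p = lin (\<lambda>y d. lin (\<lambda>x c. H x c y d) p) q"
  unfolding lin_def by (rule sum.swap)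

lemma inner_tau_lin: "inner_tau p q = lin (\<lambda>u c. lin (ip1 u c) q) p"
proof -
  have a1: "addi (\<lambda>u c. lin (\<lambda>v d. sg (u @ v) (c * d)) q)"
    by (rule addiI) (simp add: lin_def single_add distrib_right sum.distrib)
  have a2: "addi (\<lambda>w c. sg (rev w) (cnj c))" by (rule addiI) (simp add: single_add)
  have a3: "addi (\<lambda>u c. lin (\<lambda>v d. sg (rev u @ v) (cnj c * d)) q)"
    by (rule addiI) (simp add: lin_def single_add distrib_right sum.distrib)
  have "inner_tau p q = tau (lin (\<lambda>u c. lin (\<lambda>v d. sg (u @ v) (c * d)) q) (lin (\<lambda>w c. sg (rev w) (cnj c)) p))"
    unfolding inner_tau_def ncmult_lin ncstar_lin ..
  also have "\<dots> = tau (lin (\<lambda>w c. lin (\<lambda>v d. sg (rev w @ v) (cnj c * d)) q) p)"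
    by (simp add: lin_comp[OF a1] lin_single[OF a1])
  also have "\<dots> = lin (\<lambda>w c. lin (\<lambda>v d. lin (\<lambda>w c. c * of_nat (sc_moment w)) (sg (rev w @ v) (cnj c * d))) q) p"
    unfolding tau_lin by (simp add: lin_comp[OF addi_tau])
  also have "\<dots> = lin (\<lambda>u c. lin (ip1 u c) q) p"
    by (simp add: lin_single[OF addi_tau] ip1_def[abs_def])
  finally show ?thesis .
qed



lemma sum_split_add: "(\<Sum>k<x+y. f k) = (\<Sum>k<x. f k) + (\<Sum>k<y. (f (x + k) :: 'a::comm_monoid_add))"
  for x y :: nat
  by (induction y) (simp_all add: add.assoc)

lemma sd: "sc_moment (rev s @ a @ i # b) =
  (\<Sum>k<length s. if s!k = i then sc_moment (rev (take k s) @ a) * sc_moment (rev (drop (Suc k) s) @ b) else 0)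
 + (\<Sum>k<length b. if b!k = i then sc_moment (take k b) * sc_moment (rev s @ a @ drop (Suc k) b) else 0)
 + (\<Sum>k<length a. if a!k = i then sc_moment (drop (Suc k) a) * sc_moment (rev s @ take k a @ b) else 0)"
proof -
  define L where "L = b @ rev s @ a"
  define F where "F k = (if L!k = i then sc_moment (take k L) * sc_moment (drop (Suc k) L) else 0)" for k
  have "sc_moment (rev s @ a @ i # b) = sc_moment (i # L)"
    using sc_cyc[of "rev s @ a" "i # b"] by (simp add: L_def)
  also have "\<dots> = (\<Sum>k<length b + (length s + length a). F k)" unfolding F_def L_def by simp
  also have "\<dots> = (\<Sum>k<length b. F k) + ((\<Sum>k<length s. F (length b + k)) + (\<Sum>k<length a. F (length b + (length s + k))))"
    by (simp add: sum_split_add)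
  also have "(\<Sum>k<length b. F k) = (\<Sum>k<length b. if b!k = i then sc_moment (take k b) * sc_moment (rev s @ a @ drop (Suc k) b) else 0)"
  proof (rule sum.cong)
    fix k assume k: "k \<in> {..<length b}"
    have "sc_moment (drop (Suc k) b @ rev s @ a) = sc_moment (rev s @ a @ drop (Suc k) b)"
      using sc_cyc[of "drop (Suc k) b" "rev s @ a"] by simp
    then show "F k = (if b!k = i then sc_moment (take k b) * sc_moment (rev s @ a @ drop (Suc k) b) else 0)"
      using k by (simp add: F_def L_def nth_append)
  qed simp
  also have "(\<Sum>k<length a. F (length b + (length s + k))) =
     (\<Sum>k<length a. if a!k = i then sc_moment (drop (Suc k) a) * sc_moment (rev s @ take k a @ b) else 0)"
  proof (rule sum.cong)
    fix k assume k: "k \<in> {..<length a}"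
    have "sc_moment (b @ rev s @ take k a) = sc_moment (rev s @ take k a @ b)"
      using sc_cyc[of b "rev s @ take k a"] by simp
    then show "F (length b + (length s + k)) = (if a!k = i then sc_moment (drop (Suc k) a) * sc_moment (rev s @ take k a @ b) else 0)"
      using k by (simp add: F_def L_def nth_append mult.commute)
  qed simp
  also have "(\<Sum>k<length s. F (length b + k)) =
     (\<Sum>k<length s. (\<lambda>k. if s!k = i then sc_moment (rev (take k s) @ a) * sc_moment (rev (drop (Suc k) s) @ b) else 0) (length s - Suc k))"
  proof (rule sum.cong)
    fix k assume k: "k \<in> {..<length s}"
    let ?K = "length s - Suc k"
    have t: "take k (rev s) = rev (drop (Suc ?K) s)" using k by (simp add: rev_drop)
    have d: "drop (Suc k) (rev s) = rev (take ?K s)" using k by (simp add: rev_take)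
    have "sc_moment (b @ rev (drop (Suc ?K) s)) = sc_moment (rev (drop (Suc ?K) s) @ b)"
      by (rule sc_cyc)
    then show "F (length b + k) = (\<lambda>k. if s!k = i then sc_moment (rev (take k s) @ a) * sc_moment (rev (drop (Suc k) s) @ b) else 0) ?K"
      using k by (simp add: F_def L_def nth_append t d rev_nth mult.commute)
  qed simp
  also have "\<dots> = (\<Sum>k<length s. if s!k = i then sc_moment (rev (take k s) @ a) * sc_moment (rev (drop (Suc k) s) @ b) else 0)"
    by (rule sum.nat_diff_reindex)
  finally show ?thesis by (simp add: add.assoc add.commute add.left_commute)
qed



definition supp :: "'k set \<Rightarrow> ('k \<Rightarrow>\<^sub>0 complex) set" where
  "supp G = {p. ks p \<subseteq> G}"

lemma supp_zero[simp]: "0 \<in> supp G" by (simp add: supp_def)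
lemma supp_single: "w \<in> G \<Longrightarrow> sg w c \<in> supp G" by (simp add: supp_def)
lemma supp_add: "p \<in> supp G \<Longrightarrow> q \<in> supp G \<Longrightarrow> p + q \<in> supp G"
  unfolding supp_def using keys_add[of p q] by auto
lemma supp_uminus: "p \<in> supp G \<Longrightarrow> - p \<in> supp G"
  unfolding supp_def by (auto simp: in_keys_iff)
lemma supp_diff: "p \<in> supp G \<Longrightarrow> q \<in> supp G \<Longrightarrow> p - q \<in> supp G"
  using supp_add[of p G "-q"] supp_uminus[of q G] by simp
lemma supp_sum: "(\<And>x. x \<in> S \<Longrightarrow> f x \<in> supp G) \<Longrightarrow> (\<Sum>x\<in>S. f x) \<in> supp G"
  by (induction S rule: infinite_finite_induct) (auto intro: supp_add)
lemma supp_if: "(P \<Longrightarrow> p \<in> supp G) \<Longrightarrow> (if P then p else 0) \<in> supp G" by auto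
lemma supp_lin: "(\<And>w c. w \<in> ks p \<Longrightarrow> F w c \<in> supp G) \<Longrightarrow> lin F p \<in> supp G"
  unfolding lin_def by (rule supp_sum) auto
lemma supp_keys: "p \<in> supp G \<Longrightarrow> w \<in> ks p \<Longrightarrow> w \<in> G" by (auto simp: supp_def)

definition good :: "nat \<Rightarrow> nat list set" where "good n = {w. set w \<subseteq> {..<n}}"

lemma ncpolys_supp: "ncpolys n = supp (good n)"
  by (auto simp: ncpolys_def supp_def good_def)

definition adjw :: "nat \<Rightarrow> nat list \<Rightarrow> nat list \<Rightarrow> complex \<Rightarrow> ncpoly" where
  "adjw i a b c = sg (a @ i # b) c
     - (\<Sum>k<length b. if b!k = i then sg (a @ drop (Suc k) b) (c * of_nat (sc_moment (take k b))) else 0)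
     - (\<Sum>k<length a. if a!k = i then sg (take k a @ b) (c * of_nat (sc_moment (drop (Suc k) a))) else 0)"

definition adjA :: "nat \<Rightarrow> nat list \<times> nat list \<Rightarrow> complex \<Rightarrow> ncpoly" where
  "adjA i x c = (case x of (a, b) \<Rightarrow> adjw i a b c)"

definition adjF :: "nat \<Rightarrow> nctens \<Rightarrow> ncpoly" where
  "adjF i \<xi> = lin (adjA i) \<xi>"

lemma addi_adjA: "addi (adjA i)"
  by (rule addiI) (auto simp: adjA_def adjw_def single_add distrib_right sum.distrib[symmetric] if_distrib
      algebra_simps split: prod.splits cong: if_cong)

lemma lin_fun_sum: "lin (\<lambda>x c. \<Sum>k\<in>S. F k x c) p = (\<Sum>k\<in>S. lin (F k) p)"
  unfolding lin_def by (rule sum.swap)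

lemma lin_fun_if: "lin (\<lambda>x c. if P then F x c else 0) p = (if P then lin F p else 0)"
  unfolding lin_def by simp

lemma lin_sum_if_single:
  assumes "addi G"
  shows "lin G (\<Sum>k\<in>S. if P k then sg (X k) (c k) else 0) = (\<Sum>k\<in>S. if P k then G (X k) (c k) else 0)"
  by (simp add: lin_sum[OF assms] lin_single[OF assms] if_distrib[where f = "lin G"] cong: if_cong)

lemma times_if0: "(x::'a::mult_zero) * (if P then y else 0) = (if P then x * y else 0)"
  "(if P then y else 0) * x = (if P then y * x else 0)" by auto

lemma adj_word:
  "(\<Sum>k<length s. if s!k = i then ip2 (take k s, drop (Suc k) s) d (a, b) e else 0)
   = lin (ip1 s d) (adjw i a b e)"
proof -
  have "lin (ip1 s d) (adjw i a b e) = ip1 s d (a @ i # b) e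
     - (\<Sum>k<length b. if b!k = i then ip1 s d (a @ drop (Suc k) b) (e * of_nat (sc_moment (take k b))) else 0)
     - (\<Sum>k<length a. if a!k = i then ip1 s d (take k a @ b) (e * of_nat (sc_moment (drop (Suc k) a))) else 0)"
    unfolding adjw_def
    by (simp add: lin_diff[OF addi_ip1] lin_single[OF addi_ip1] lin_sum_if_single[OF addi_ip1])
  also have "\<dots> = cnj d * e * of_nat (sc_moment (rev s @ a @ i # b))
     - cnj d * e * of_nat (\<Sum>k<length b. if b!k = i then sc_moment (take k b) * sc_moment (rev s @ a @ drop (Suc k) b) else 0)
     - cnj d * e * of_nat (\<Sum>k<length a. if a!k = i then sc_moment (drop (Suc k) a) * sc_moment (rev s @ take k a @ b) else 0)"
    by (simp add: ip1_def sum_distrib_left of_nat_sum if_distrib[where f = of_nat] algebra_simps times_if0 cong: if_cong)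
  also have "\<dots> = cnj d * e * of_nat (\<Sum>k<length s. if s!k = i then sc_moment (rev (take k s) @ a) * sc_moment (rev (drop (Suc k) s) @ b) else 0)"
    by (subst sd) (simp add: algebra_simps)
  also have "\<dots> = (\<Sum>k<length s. if s!k = i then ip2 (take k s, drop (Suc k) s) d (a, b) e else 0)"
    by (simp add: ip2_def sum_distrib_left of_nat_sum if_distrib[where f = of_nat] algebra_simps times_if0 cong: if_cong)
  finally show ?thesis ..
qed

lemma adjoint: "inner_tau2 (ncpartial i q) \<xi> = inner_tau q (adjF i \<xi>)"
proof -
  have "inner_tau2 (ncpartial i q) \<xi> = lin (\<lambda>s d. lin (\<lambda>a c. lin (ip2 a c) \<xi>) (Pw i s d)) q"
    unfolding inner_tau2_lin ncpartial_lin by (rule lin_comp[OF addi_ip2'])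
  also have "\<dots> = lin (\<lambda>s d. lin (\<lambda>x e. lin (ip1 s d) (adjA i x e)) \<xi>) q"
  proof (rule lin_cong)
    fix s d
    have "lin (\<lambda>a c. lin (ip2 a c) \<xi>) (Pw i s d) =
        (\<Sum>k<length s. if s!k = i then lin (ip2 (take k s, drop (Suc k) s) d) \<xi> else 0)"
      unfolding Pw_def by (simp add: lin_sum_if_single[OF addi_ip2'])
    also have "\<dots> = lin (\<lambda>x e. \<Sum>k<length s. if s!k = i then ip2 (take k s, drop (Suc k) s) d x e else 0) \<xi>"
      by (simp add: lin_fun_sum lin_fun_if)
    also have "\<dots> = lin (\<lambda>x e. lin (ip1 s d) (adjA i x e)) \<xi>"
      by (rule lin_cong) (auto simp: adjA_def adj_word split: prod.splits)
    finally show "lin (\<lambda>a c. lin (ip2 a c) \<xi>) (Pw i s d) = lin (\<lambda>x e. lin (ip1 s d) (adjA i x e)) \<xi>" .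
  qed
  also have "\<dots> = inner_tau q (adjF i \<xi>)"
    unfolding inner_tau_lin adjF_def by (rule lin_cong) (simp add: lin_comp[OF addi_ip1])
  finally show ?thesis .
qed



lemma lin_minus_fun: "lin (\<lambda>x c. F x c - G x c) p = lin F p - lin G p"
  for F G :: "'k \<Rightarrow> complex \<Rightarrow> 'b::ab_group_add"
  unfolding lin_def by (simp add: sum_subtractf)

lemma inner_tau_diff2: "inner_tau r (p - q) = inner_tau r p - inner_tau r q"
  unfolding inner_tau_lin by (simp add: lin_diff[OF addi_ip1] lin_minus_fun)

lemma inner_tau_faithful: assumes "inner_tau r r = 0" shows "r = 0"
proof -
  have "(\<Sum>u\<in>ks r. \<Sum>v\<in>ks r. cnj (lk r u) * lk r v * of_nat (sc_moment (rev u @ v))) = 0"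
    using assms unfolding inner_tau_lin lin_def ip1_def .
  then have "\<forall>u\<in>ks r. lk r u = 0" by (rule faithful[rotated]) simp
  then show ?thesis by (intro poly_mapping_eqI) (auto simp: in_keys_iff)
qed

definition tgood :: "nat \<Rightarrow> (nat list \<times> nat list) set" where
  "tgood n = {(u, v). set u \<subseteq> {..<n} \<and> set v \<subseteq> {..<n}}"

lemma adjF_good: assumes "i < n" "\<xi> \<in> supp (tgood n)" shows "adjF i \<xi> \<in> supp (good n)"
  unfolding adjF_def
proof (rule supp_lin)
  fix x c assume "x \<in> ks \<xi>"
  moreover obtain a b where x: "x = (a, b)" by (cases x)
  ultimately have ab: "set a \<subseteq> {..<n}" "set b \<subseteq> {..<n}"
    using supp_keys[OF assms(2)] by (auto simp: tgood_def)
  have sd: "set (drop k l) \<subseteq> set l" "set (take k l) \<subseteq> set l" for k and l :: "nat list"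
    by (rule set_drop_subset, rule set_take_subset)
  show "adjA i x c \<in> supp (good n)"
    unfolding x adjA_def adjw_def using assms(1) ab
    by (auto intro!: supp_diff supp_sum supp_if supp_single simp: good_def subset_iff dest: in_set_dropD in_set_takeD) (meson in_set_dropD in_set_takeD)+
qed

lemma partial_adj_eq: assumes "i < n" "\<xi> \<in> supp (tgood n)" shows "partial_adj n i \<xi> = adjF i \<xi>"
  unfolding partial_adj_def
proof (rule the_equality)
  show "adjF i \<xi> \<in> ncpolys n \<and> (\<forall>q\<in>ncpolys n. inner_tau2 (ncpartial i q) \<xi> = inner_tau q (adjF i \<xi>))"
    using adjF_good[OF assms] by (simp add: ncpolys_supp adjoint)
next
  fix p assume p: "p \<in> ncpolys n \<and> (\<forall>q\<in>ncpolys n. inner_tau2 (ncpartial i q) \<xi> = inner_tau q p)"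
  define r where "r = p - adjF i \<xi>"
  have r: "r \<in> ncpolys n" using p adjF_good[OF assms] by (simp add: r_def ncpolys_supp supp_diff)
  have "inner_tau r p = inner_tau r (adjF i \<xi>)" using p r by (simp add: adjoint[symmetric])
  then have "inner_tau r r = 0" by (simp add: r_def[symmetric, THEN sym] inner_tau_diff2 r_def)
  then have "r = 0" by (rule inner_tau_faithful)
  then show "p = adjF i \<xi>" by (simp add: r_def)
qed



lemma length_cut: "k < length w \<Longrightarrow> length (cutw w k) = length w - 1"
  by (simp add: cutw_def)

lemma nth_cutw: assumes "k < length w" "t < length w - 1"
  shows "cutw w k ! t = w ! ((k + 1 + t) mod length w)"
proof (cases "t < length w - Suc k")
  case True
  then have "k + 1 + t < length w" by auto
  then show ?thesis using True assms by (simp add: cutw_def nth_append add.commute add.left_commute)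
next
  case False
  let ?m = "length w"
  have e: "k + 1 + t = (t - (?m - Suc k)) + ?m" using False assms by auto
  have x: "t - (?m - Suc k) < ?m" using assms by auto
  have "(k + 1 + t) mod ?m = t - (?m - Suc k)" by (simp only: e mod_add_self2) (simp add: x)
  then show ?thesis using False assms by (simp add: cutw_def nth_append)
qed

lemma set_cut: "set (cutw w k) \<subseteq> set w"
  by (auto simp: cutw_def dest: in_set_dropD in_set_takeD)

lemma cut_rot:
  assumes l: "l < length w" and k': "k' < length w - 1"
  shows "cutw w ((l + 1 + k') mod length w) = drop (Suc k') (cutw w l) @ [w!l] @ take k' (cutw w l)"
proof (rule nth_equalityI)
  let ?m = "length w"
  let ?c = "cutw w l"
  have m: "0 < ?m" using l by auto
  have kk: "(l + 1 + k') mod ?m < ?m" using m by simp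
  have lc: "length ?c = ?m - 1" using l by (rule length_cut)
  show "length (cutw w ((l + 1 + k') mod ?m)) = length (drop (Suc k') ?c @ [w!l] @ take k' ?c)"
    using lc k' length_cut[OF kk] by simp
  fix t assume "t < length (cutw w ((l + 1 + k') mod ?m))"
  then have t: "t < ?m - 1" using length_cut[OF kk] by simp
  have mm: "((l + 1 + k') mod ?m + 1 + t) mod ?m = (l + 1 + k' + 1 + t) mod ?m"
    by (metis mod_add_left_eq add.assoc)
  have lhs: "cutw w ((l + 1 + k') mod ?m) ! t = w ! ((l + 1 + k' + 1 + t) mod ?m)"
    using nth_cutw[OF kk t] by (simp only: mm)
  show "cutw w ((l + 1 + k') mod ?m) ! t = (drop (Suc k') ?c @ [w!l] @ take k' ?c) ! t"
  proof (cases "t < ?m - 2 - k'")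
    case True
    then have "Suc k' + t < ?m - 1" by auto
    then show ?thesis using True lhs lc nth_cutw[OF l, of "Suc k' + t"]
      by (simp add: nth_append ac_simps)
  next
    case False
    show ?thesis
    proof (cases "t = ?m - 2 - k'")
      case True
      have "l + 1 + k' + 1 + t = l + ?m" using True k' by auto
      then show ?thesis using True lhs lc k' l by (simp add: nth_append)
    next
      case False2: False
      define t' where "t' = t - (?m - 1 - k')"
      have t'k: "t' < k'" using t False False2 k' by (auto simp: t'_def)
      have e: "l + 1 + k' + 1 + t = (l + 1 + t') + ?m" using False False2 k' t by (auto simp: t'_def)
      have "(drop (Suc k') ?c @ [w!l] @ take k' ?c) ! t = ?c ! t'"
        using False False2 lc k' t'k by (simp add: nth_append t'_def)
      also have "\<dots> = w ! ((l + 1 + t') mod ?m)" using nth_cutw[OF l, of t'] t'k k' by simp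
      moreover have "(l + 1 + k' + 1 + t) mod ?m = (l + 1 + t') mod ?m" by (simp only: e mod_add_self2)
      ultimately show ?thesis using lhs by simp
    qed
  qed
qed



definition corr1 :: "nat list \<Rightarrow> nat \<Rightarrow> complex \<Rightarrow> ncpoly" where
  "corr1 v p c = (\<Sum>k<length (drop (Suc p) v). if drop (Suc p) v ! k = v!p then
      sg (take p v @ drop (Suc k) (drop (Suc p) v)) (c * of_nat (sc_moment (take k (drop (Suc p) v)))) else 0)"

definition corr2 :: "nat list \<Rightarrow> nat \<Rightarrow> complex \<Rightarrow> ncpoly" where
  "corr2 v p c = (\<Sum>k<length (take p v). if take p v ! k = v!p then
      sg (take k (take p v) @ drop (Suc p) v) (c * of_nat (sc_moment (drop (Suc k) (take p v)))) else 0)"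

lemma adjF_Pw: "adjF i (Pw i v c) = (\<Sum>p<length v. if v!p = i then adjw i (take p v) (drop (Suc p) v) c else 0)"
  unfolding adjF_def Pw_def by (simp add: lin_sum_if_single[OF addi_adjA] adjA_def cong: if_cong)

lemma sum_single_const: "(\<Sum>p<m. sg v c) = sg v (of_nat m * c)"
  by (induction m) (simp_all add: single_add algebra_simps)

lemma sum_adjF_Pw:
  assumes "set v \<subseteq> {..<n}"
  shows "(\<Sum>i<n. adjF i (Pw i v c)) = sg v (of_nat (length v) * c) - (\<Sum>p<length v. corr1 v p c + corr2 v p c)"
proof -
  have "(\<Sum>i<n. adjF i (Pw i v c)) = (\<Sum>p<length v. \<Sum>i<n. if v!p = i then adjw i (take p v) (drop (Suc p) v) c else 0)"
    unfolding adjF_Pw by (rule sum.swap)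
  also have "\<dots> = (\<Sum>p<length v. adjw (v!p) (take p v) (drop (Suc p) v) c)"
  proof (rule sum.cong)
    fix p assume "p \<in> {..<length v}"
    then have "v!p < n" using assms nth_mem by fastforce
    then show "(\<Sum>i<n. if v!p = i then adjw i (take p v) (drop (Suc p) v) c else 0) = adjw (v!p) (take p v) (drop (Suc p) v) c"
      by (simp add: sum.delta)
  qed simp
  also have "\<dots> = (\<Sum>p<length v. sg v c - (corr1 v p c + corr2 v p c))"
  proof (rule sum.cong)
    fix p assume p: "p \<in> {..<length v}"
    then have "take p v @ v!p # drop (Suc p) v = v" by (simp add: id_take_nth_drop[symmetric])
    then show "adjw (v!p) (take p v) (drop (Suc p) v) c = sg v c - (corr1 v p c + corr2 v p c)"
      unfolding adjw_def corr1_def corr2_def by (simp add: algebra_simps)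
  qed simp
  also have "\<dots> = sg v (of_nat (length v) * c) - (\<Sum>p<length v. corr1 v p c + corr2 v p c)"
    by (simp add: sum_subtractf sum_single_const)
  finally show ?thesis .
qed

lemma rot1:
  fixes cl :: "nat list" and x k' p' :: nat
  assumes "k' < p'" "p' < length cl"
  defines "v \<equiv> drop (Suc k') cl @ [x] @ take k' cl" and "p \<equiv> p' - k' - 1" and "q \<equiv> length cl - 1 - p'"
  shows "v ! p = cl ! p'" "drop (Suc p) v ! q = x" "take p v = take (p' - k' - 1) (drop (Suc k') cl)"
    "drop (Suc q) (drop (Suc p) v) = take k' cl" "take q (drop (Suc p) v) = drop (Suc p') cl"
    "length v = length cl" "length (drop (Suc p) v) = length cl - 1 - p"
proof -
  have L: "Suc (length cl - Suc 0) = length cl" using assms(2) by auto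
  show "v ! p = cl ! p'" "drop (Suc p) v ! q = x" "take p v = take (p' - k' - 1) (drop (Suc k') cl)"
    "drop (Suc q) (drop (Suc p) v) = take k' cl" "take q (drop (Suc p) v) = drop (Suc p') cl"
    "length v = length cl" "length (drop (Suc p) v) = length cl - 1 - p"
    using assms(1,2) by (auto simp: v_def p_def q_def nth_append L)
qed

lemma sum3:
  fixes a :: nat and b :: "nat \<Rightarrow> nat" and d :: "nat \<Rightarrow> nat \<Rightarrow> nat"
  shows "(\<Sum>k<a. \<Sum>p<b k. \<Sum>q<d k p. f k p q) =
   (\<Sum>(k,p,q)\<in>(SIGMA k:{..<a}. SIGMA p:{..<b k}. {..<d k p}). (f k p q :: 'a::comm_monoid_add))"
proof -
  have "(\<Sum>k<a. \<Sum>p<b k. \<Sum>q<d k p. f k p q) = (\<Sum>k<a. \<Sum>(p,q)\<in>(SIGMA p:{..<b k}. {..<d k p}). f k p q)"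
    by (rule sum.cong[OF refl], rule sum.Sigma) auto
  also have "\<dots> = (\<Sum>(k,p,q)\<in>(SIGMA k:{..<a}. SIGMA p:{..<b k}. {..<d k p}). f k p q)"
    by (rule sum.Sigma) auto
  finally show ?thesis .
qed

lemma modsum: "a < (m::nat) \<Longrightarrow> b + c = a + m \<Longrightarrow> (b mod m + c) mod m = a"
  by (metis mod_add_left_eq mod_add_self2 mod_less)

definition T1 :: "nat list \<Rightarrow> nat \<Rightarrow> complex \<Rightarrow> nat \<Rightarrow> nat \<Rightarrow> nat \<Rightarrow> ncpoly" where
  "T1 w j c k p q = (if w!k = j \<and> drop (Suc p) (cutw w k) ! q = cutw w k ! p then
     sg (take p (cutw w k) @ drop (Suc q) (drop (Suc p) (cutw w k))) (c * of_nat (sc_moment (take q (drop (Suc p) (cutw w k)))))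
     else 0)"

definition T2 :: "nat list \<Rightarrow> nat \<Rightarrow> complex \<Rightarrow> nat \<Rightarrow> nat \<Rightarrow> nat \<Rightarrow> ncpoly" where
  "T2 w j c l p' k' = (if cutw w l ! p' = w!l \<and> cutw w l ! k' = j then
     sg (cutw (take p' (cutw w l)) k') (c * of_nat (sc_moment (drop (Suc p') (cutw w l)))) else 0)"

lemma W1_L:
  assumes "k < length w"
  shows "(if w!k = j then (\<Sum>p<length w - 1. corr1 (cutw w k) p c) else 0) =
     (\<Sum>p<length w - 1. \<Sum>q<length w - 1 - Suc p. T1 w j c k p q)"
proof -
  have lc: "length (cutw w k) = length w - 1" using assms by (rule length_cut)
  show ?thesis by (cases "w!k = j") (simp_all add: corr1_def T1_def lc)
qed

lemma W1_R:
  assumes "l < length w" "p' < length w - 1"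
  shows "(if cutw w l ! p' = w!l then
            Dw j (take p' (cutw w l)) (c * of_nat (sc_moment (drop (Suc p') (cutw w l)))) else 0) =
      (\<Sum>k'<p'. T2 w j c l p' k')"
proof -
  have lc: "length (cutw w l) = length w - 1" using assms(1) by (rule length_cut)
  show ?thesis
    using assms(2) by (cases "cutw w l ! p' = w!l") (simp_all add: Dw_def T2_def lc min_def cong: if_cong)
qed

lemma cut_take: "k' < p' \<Longrightarrow> p' < length cl \<Longrightarrow>
  cutw (take p' cl) k' = take (p' - k' - 1) (drop (Suc k') cl) @ take k' cl"
  by (simp add: cutw_def drop_take min_def)

lemma W1_term:
  assumes r: "l < length w" "p' < length w - 1" "k' < p'"
  shows "T1 w j c ((l + 1 + k') mod length w) (p' - k' - 1) (length w - 2 - p') = T2 w j c l p' k'"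
proof -
  let ?m = "length w"
  let ?cl = "cutw w l"
  have lcl: "length ?cl = ?m - 1" using r by (simp add: length_cut)
  have k'm: "k' < ?m - 1" using r by simp
  have cr: "cutw w ((l + 1 + k') mod ?m) = drop (Suc k') ?cl @ [w!l] @ take k' ?cl"
    by (rule cut_rot[OF r(1) k'm])
  have wk: "w ! ((l + 1 + k') mod ?m) = ?cl ! k'" using nth_cutw[OF r(1), of k'] k'm by simp
  have q: "?m - 2 - p' = length ?cl - 1 - p'" using lcl by simp
  have p'c: "p' < length ?cl" using lcl r by simp
  note R1 = rot1[OF r(3) p'c, of "w!l"]
  have ct: "cutw (take p' ?cl) k' = take (p' - k' - 1) (drop (Suc k') ?cl) @ take k' ?cl"
    by (rule cut_take[OF r(3) p'c])
  show ?thesis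
    unfolding T1_def T2_def cr wk q R1 ct by (auto)
qed

lemma W1_re:
  fixes w :: "nat list"
  defines "m \<equiv> length w"
  shows "(\<Sum>(l,p',k')\<in>(SIGMA l:{..<m}. SIGMA p':{..<m-1}. {..<p'}). T2 w j c l p' k') =
         (\<Sum>(k,p,q)\<in>(SIGMA k:{..<m}. SIGMA p:{..<m-1}. {..<m - 1 - Suc p}). T1 w j c k p q)"
proof -
  define S where "S = (SIGMA l:{..<m}. SIGMA p':{..<m-1}. {..<p'})"
  define T where "T = (SIGMA k:{..<m}. SIGMA p:{..<m-1}. {..<m - 1 - Suc p})"
  define \<psi> where "\<psi> = (\<lambda>(l, p', k'). ((l + 1 + k') mod m, p' - k' - 1, m - 2 - p'))"
  define \<phi> where "\<phi> = (\<lambda>(k, p, q). ((k + (p + q + 2)) mod m, m - q - 2, m - p - q - 3))"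
  have "(\<Sum>(l,p',k')\<in>S. T2 w j c l p' k') = (\<Sum>(k,p,q)\<in>T. T1 w j c k p q)"
  proof (rule sum.reindex_bij_witness[where i = \<phi> and j = \<psi>])
    fix a assume "a \<in> S"
    then obtain l p' k' where a: "a = (l, p', k')" and r: "l < m" "p' < m - 1" "k' < p'" by (auto simp: S_def)
    have "((l + 1 + k') mod m + (p' - k' - 1 + (m - 2 - p') + 2)) mod m = l"
      by (rule modsum) (use r in linarith)+
    moreover have "m - (m - 2 - p') - 2 = p'" using r by linarith
    moreover have "m - (p' - k' - 1) - (m - 2 - p') - 3 = k'" using r by linarith
    ultimately show "\<phi> (\<psi> a) = a" by (simp only: a \<phi>_def \<psi>_def prod.case)
    have "(l + 1 + k') mod m < m" using r by simp
    moreover have "p' - k' - 1 < m - 1" using r by linarith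
    moreover have "m - 2 - p' < m - 1 - Suc (p' - k' - 1)" using r by linarith
    ultimately show "\<psi> a \<in> T" by (simp only: a \<psi>_def T_def prod.case mem_Sigma_iff lessThan_iff)
    show "(case \<psi> a of (k, p, q) \<Rightarrow> T1 w j c k p q) = (case a of (l, p', k') \<Rightarrow> T2 w j c l p' k')"
      using W1_term[of l w p' k' j c] r by (simp add: a \<psi>_def m_def)
  next
    fix b assume "b \<in> T"
    then obtain k p q where b: "b = (k, p, q)" and r: "k < m" "p < m - 1" "q < m - 1 - Suc p" by (auto simp: T_def)
    have "((k + (p + q + 2)) mod m + (1 + (m - p - q - 3))) mod m = k"
      by (rule modsum) (use r in linarith)+
    then have e1: "((k + (p + q + 2)) mod m + 1 + (m - p - q - 3)) mod m = k" by (simp only: add.assoc)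
    have e2: "m - q - 2 - (m - p - q - 3) - 1 = p" using r by linarith
    have e3: "m - 2 - (m - q - 2) = q" using r by linarith
    show "\<psi> (\<phi> b) = b" by (simp only: b \<phi>_def \<psi>_def prod.case e1 e2 e3)
    have "(k + (p + q + 2)) mod m < m" using r by simp
    moreover have "m - q - 2 < m - 1" using r by linarith
    moreover have "m - p - q - 3 < m - q - 2" using r by linarith
    ultimately show "\<phi> b \<in> S" by (simp only: b \<phi>_def S_def prod.case mem_Sigma_iff lessThan_iff)
  qed
  then show ?thesis by (simp only: S_def T_def)
qed

lemma W1:
  fixes w :: "nat list" and j :: nat and c :: complex
  shows "(\<Sum>k<length w. if w!k = j then (\<Sum>p<length w - 1. corr1 (cutw w k) p c) else 0) =
         (\<Sum>l<length w. \<Sum>p'<length w - 1. if cutw w l ! p' = w!l then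
            Dw j (take p' (cutw w l)) (c * of_nat (sc_moment (drop (Suc p') (cutw w l)))) else 0)"
proof -
  have "(\<Sum>k<length w. if w!k = j then (\<Sum>p<length w - 1. corr1 (cutw w k) p c) else 0) =
     (\<Sum>k<length w. \<Sum>p<length w - 1. \<Sum>q<length w - 1 - Suc p. T1 w j c k p q)"
    by (rule sum.cong[OF refl]) (simp add: W1_L)
  also have "\<dots> = (\<Sum>l<length w. \<Sum>p'<length w - 1. \<Sum>k'<p'. T2 w j c l p' k')"
    by (simp only: sum3 W1_re)
  also have "\<dots> = (\<Sum>l<length w. \<Sum>p'<length w - 1. if cutw w l ! p' = w!l then
            Dw j (take p' (cutw w l)) (c * of_nat (sc_moment (drop (Suc p') (cutw w l)))) else 0)"
    by (intro sum.cong refl) (simp add: W1_R)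
  finally show ?thesis .
qed

definition T3 :: "nat list \<Rightarrow> nat \<Rightarrow> complex \<Rightarrow> nat \<Rightarrow> nat \<Rightarrow> nat \<Rightarrow> ncpoly" where
  "T3 w j c k p q = (if w!k = j \<and> take p (cutw w k) ! q = cutw w k ! p then
     sg (take q (take p (cutw w k)) @ drop (Suc p) (cutw w k)) (c * of_nat (sc_moment (drop (Suc q) (take p (cutw w k)))))
     else 0)"

definition T4 :: "nat list \<Rightarrow> nat \<Rightarrow> complex \<Rightarrow> nat \<Rightarrow> nat \<Rightarrow> nat \<Rightarrow> ncpoly" where
  "T4 w j c l p' k'' = (if cutw w l ! p' = w!l \<and> drop (Suc p') (cutw w l) ! k'' = j then
     sg (cutw (drop (Suc p') (cutw w l)) k'') (of_nat (sc_moment (take p' (cutw w l))) * c) else 0)"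

lemma W2_L:
  assumes "k < length w"
  shows "(if w!k = j then (\<Sum>p<length w - 1. corr2 (cutw w k) p c) else 0) =
     (\<Sum>p<length w - 1. \<Sum>q<p. T3 w j c k p q)"
proof -
  have lc: "length (cutw w k) = length w - 1" using assms by (rule length_cut)
  show ?thesis by (cases "w!k = j") (auto simp: corr2_def T3_def lc min_def intro!: sum.cong)
qed

lemma W2_R:
  assumes "l < length w" "p' < length w - 1"
  shows "(if cutw w l ! p' = w!l then
            Dw j (drop (Suc p') (cutw w l)) (of_nat (sc_moment (take p' (cutw w l))) * c) else 0) =
      (\<Sum>k''<length w - 2 - p'. T4 w j c l p' k'')"
proof -
  have lc: "length (cutw w l) = length w - 1" using assms(1) by (rule length_cut)
  show ?thesis
    using assms(2) by (cases "cutw w l ! p' = w!l") (simp_all add: Dw_def T4_def lc cong: if_cong)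
qed

lemma rot2:
  fixes cl :: "nat list" and x K p' :: nat
  assumes "p' < K" "K < length cl"
  defines "v \<equiv> drop (Suc K) cl @ [x] @ take K cl" and "q \<equiv> length cl - 1 - K" and "p \<equiv> length cl - K + p'"
  shows "take p v ! q = x" "v ! p = cl ! p'"
    "take q (take p v) @ drop (Suc p) v = drop (Suc K) cl @ take (K - Suc p') (drop (Suc p') cl)"
    "drop (Suc q) (take p v) = take p' cl"
proof -
  have L: "length (drop (Suc K) cl) = q" using assms(2) by (simp add: q_def)
  have p: "p = Suc q + p'" using assms by (simp add: p_def q_def)
  show "take p v ! q = x" using L assms(1) by (simp add: v_def p nth_append)
  have np: "\<not> (length cl + p' - K < length cl - Suc K)" using assms(1,2) by linarith
  show "v ! p = cl ! p'" using L assms np by (simp add: v_def p nth_append)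
  show "take q (take p v) @ drop (Suc p) v = drop (Suc K) cl @ take (K - Suc p') (drop (Suc p') cl)"
    using L assms by (simp add: v_def p drop_take)
  have L1: "Suc (Suc (length cl - Suc 0)) - length cl = 1" using assms(2) by linarith
  show "drop (Suc q) (take p v) = take p' cl"
    using L assms by (simp add: v_def p min_def L1)
qed



lemma cut_drop: "cutw (drop (Suc p') cl) k'' = drop (Suc (p' + 1 + k'')) cl @ take k'' (drop (Suc p') cl)"
  by (simp add: cutw_def add.commute add.left_commute)

lemma W2_term:
  assumes r: "l < length w" "p' < length w - 1" "k'' < length w - 2 - p'"
  shows "T3 w j c ((l + 1 + (p' + 1 + k'')) mod length w) (length w - 1 - (p' + 1 + k'') + p') (length w - 2 - (p' + 1 + k''))
       = T4 w j c l p' k''"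
proof -
  let ?m = "length w"
  let ?cl = "cutw w l"
  let ?K = "p' + 1 + k''"
  have lcl: "length ?cl = ?m - 1" using r by (simp add: length_cut)
  have Km: "?K < ?m - 1" using r by linarith
  have Kc: "?K < length ?cl" using Km lcl by simp
  have pK: "p' < ?K" by simp
  have cr: "cutw w ((l + 1 + ?K) mod ?m) = drop (Suc ?K) ?cl @ [w!l] @ take ?K ?cl"
    by (rule cut_rot[OF r(1) Km])
  have wk: "w ! ((l + 1 + ?K) mod ?m) = ?cl ! ?K" using nth_cutw[OF r(1), of ?K] Km by simp
  have eq: "?m - 2 - ?K = length ?cl - 1 - ?K" using lcl by simp
  have ep: "?m - 1 - ?K + p' = length ?cl - ?K + p'" using lcl by simp
  note R2 = rot2[OF pK Kc, of "w!l"]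
  have dk: "drop (Suc p') ?cl ! k'' = ?cl ! ?K" using Kc by simp
  have kk: "?K - Suc p' = k''" by simp
  show ?thesis
    unfolding T3_def T4_def cr wk eq ep R2 dk cut_drop kk by (auto simp: mult.commute)
qed

lemma W2_re:
  fixes w :: "nat list"
  defines "m \<equiv> length w"
  shows "(\<Sum>(l,p',k'')\<in>(SIGMA l:{..<m}. SIGMA p':{..<m-1}. {..<m - 2 - p'}). T4 w j c l p' k'') =
         (\<Sum>(k,p,q)\<in>(SIGMA k:{..<m}. SIGMA p:{..<m-1}. {..<p}). T3 w j c k p q)"
proof -
  define S where "S = (SIGMA l:{..<m}. SIGMA p':{..<m-1}. {..<m - 2 - p'})"
  define T where "T = (SIGMA k:{..<m}. SIGMA p:{..<m-1}. {..<p})"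
  define \<psi> where "\<psi> = (\<lambda>(l, p', k''). ((l + 1 + (p' + 1 + k'')) mod m, m - 1 - (p' + 1 + k'') + p', m - 2 - (p' + 1 + k'')))"
  define \<phi> where "\<phi> = (\<lambda>(k, p, q). ((k + (1 + q)) mod m, p - q - 1, m - 2 - p))"
  have "(\<Sum>(l,p',k'')\<in>S. T4 w j c l p' k'') = (\<Sum>(k,p,q)\<in>T. T3 w j c k p q)"
  proof (rule sum.reindex_bij_witness[where i = \<phi> and j = \<psi>])
    fix a assume "a \<in> S"
    then obtain l p' k'' where a: "a = (l, p', k'')" and r: "l < m" "p' < m - 1" "k'' < m - 2 - p'" by (auto simp: S_def)
    have "((l + 1 + (p' + 1 + k'')) mod m + (1 + (m - 2 - (p' + 1 + k'')))) mod m = l"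
      by (rule modsum) (use r in linarith)+
    moreover have "m - 1 - (p' + 1 + k'') + p' - (m - 2 - (p' + 1 + k'')) - 1 = p'" using r by linarith
    moreover have "m - 2 - (m - 1 - (p' + 1 + k'') + p') = k''" using r by linarith
    ultimately show "\<phi> (\<psi> a) = a" by (simp only: a \<phi>_def \<psi>_def prod.case)
    have "(l + 1 + (p' + 1 + k'')) mod m < m" using r by simp
    moreover have "m - 1 - (p' + 1 + k'') + p' < m - 1" using r by linarith
    moreover have "m - 2 - (p' + 1 + k'') < m - 1 - (p' + 1 + k'') + p'" using r by linarith
    ultimately show "\<psi> a \<in> T" by (simp only: a \<psi>_def T_def prod.case mem_Sigma_iff lessThan_iff)
    show "(case \<psi> a of (k, p, q) \<Rightarrow> T3 w j c k p q) = (case a of (l, p', k'') \<Rightarrow> T4 w j c l p' k'')"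
      using W2_term[of l w p' k'' j c] r by (simp add: a \<psi>_def m_def)
  next
    fix b assume "b \<in> T"
    then obtain k p q where b: "b = (k, p, q)" and r: "k < m" "p < m - 1" "q < p" by (auto simp: T_def)
    have "((k + (1 + q)) mod m + (1 + ((p - q - 1) + 1 + (m - 2 - p)))) mod m = k"
      by (rule modsum) (use r in linarith)+
    then have e1: "((k + (1 + q)) mod m + 1 + ((p - q - 1) + 1 + (m - 2 - p))) mod m = k" by (simp only: add.assoc)
    have e2: "m - 1 - ((p - q - 1) + 1 + (m - 2 - p)) + (p - q - 1) = p" using r by linarith
    have e3: "m - 2 - ((p - q - 1) + 1 + (m - 2 - p)) = q" using r by linarith
    show "\<psi> (\<phi> b) = b" by (simp only: b \<phi>_def \<psi>_def prod.case e1 e2 e3)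
    have "(k + (1 + q)) mod m < m" using r by simp
    moreover have "p - q - 1 < m - 1" using r by linarith
    moreover have "m - 2 - p < m - 2 - (p - q - 1)" using r by linarith
    ultimately show "\<phi> b \<in> S" by (simp only: b \<phi>_def S_def prod.case mem_Sigma_iff lessThan_iff)
  qed
  then show ?thesis by (simp only: S_def T_def)
qed

lemma W2:
  fixes w :: "nat list" and j :: nat and c :: complex
  shows "(\<Sum>k<length w. if w!k = j then (\<Sum>p<length w - 1. corr2 (cutw w k) p c) else 0) =
         (\<Sum>l<length w. \<Sum>p'<length w - 1. if cutw w l ! p' = w!l then
            Dw j (drop (Suc p') (cutw w l)) (of_nat (sc_moment (take p' (cutw w l))) * c) else 0)"
proof -
  have "(\<Sum>k<length w. if w!k = j then (\<Sum>p<length w - 1. corr2 (cutw w k) p c) else 0) =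
     (\<Sum>k<length w. \<Sum>p<length w - 1. \<Sum>q<p. T3 w j c k p q)"
    by (rule sum.cong[OF refl]) (simp add: W2_L)
  also have "\<dots> = (\<Sum>l<length w. \<Sum>p'<length w - 1. \<Sum>k''<length w - 2 - p'. T4 w j c l p' k'')"
    by (simp only: sum3 W2_re)
  also have "\<dots> = (\<Sum>l<length w. \<Sum>p'<length w - 1. if cutw w l ! p' = w!l then
            Dw j (drop (Suc p') (cutw w l)) (of_nat (sc_moment (take p' (cutw w l))) * c) else 0)"
    by (intro sum.cong refl) (simp add: W2_R)
  finally show ?thesis .
qed



lemma lin_sum_if: "addi F \<Longrightarrow> lin F (\<Sum>k\<in>S. if P k then x k else 0) = (\<Sum>k\<in>S. if P k then lin F (x k) else 0)"
  by (simp add: lin_sum if_distrib[where f = "lin F"] cong: if_cong)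

lemma sum_if_const: "(\<Sum>i\<in>S. if P then f i else 0) = (if P then (\<Sum>i\<in>S. f i) else 0)"
  by simp

lemma ncD_single: "ncD j (sg w c) = Dw j w c"
  by (simp add: ncD_lin lin_single[OF addi_Dw])

lemma ncpartial_Dw: "ncpartial i (Dw j w c) = (\<Sum>k<length w. if w!k = j then Pw i (cutw w k) c else 0)"
  unfolding ncpartial_lin Dw_def by (simp add: lin_sum_if_single[OF addi_Pw])

lemma L1_word:
  assumes w: "set w \<subseteq> {..<n}"
  shows "- (\<Sum>i<n. adjF i (ncpartial i (ncD j (sg w c)))) - ncD j (sg w c) =
    (\<Sum>k<length w. if w!k = j then (\<Sum>p<length w - 1. corr1 (cutw w k) p c + corr2 (cutw w k) p c)
        - sg (cutw w k) (of_nat (length w) * c) else 0)"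
proof -
  have "(\<Sum>i<n. adjF i (ncpartial i (ncD j (sg w c)))) =
      (\<Sum>i<n. \<Sum>k<length w. if w!k = j then adjF i (Pw i (cutw w k) c) else 0)"
    by (simp add: ncD_single ncpartial_Dw adjF_def lin_sum_if[OF addi_adjA] cong: if_cong)
  also have "\<dots> = (\<Sum>k<length w. if w!k = j then (\<Sum>i<n. adjF i (Pw i (cutw w k) c)) else 0)"
    by (subst sum.swap) (simp add: sum_if_const)
  also have "\<dots> = (\<Sum>k<length w. if w!k = j then sg (cutw w k) (of_nat (length w - 1) * c) -
      (\<Sum>p<length w - 1. corr1 (cutw w k) p c + corr2 (cutw w k) p c) else 0)"
  proof (rule sum.cong[OF refl])
    fix k assume k: "k \<in> {..<length w}"
    have s: "set (cutw w k) \<subseteq> {..<n}" using set_cut[of w k] w by blast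
    show "(if w!k = j then (\<Sum>i<n. adjF i (Pw i (cutw w k) c)) else 0) = (if w!k = j then sg (cutw w k) (of_nat (length w - 1) * c) -
      (\<Sum>p<length w - 1. corr1 (cutw w k) p c + corr2 (cutw w k) p c) else 0)"
      using sum_adjF_Pw[OF s, of c] k by (simp add: length_cut)
  qed
  finally have A: "(\<Sum>i<n. adjF i (ncpartial i (ncD j (sg w c)))) = \<dots>" .
  have B: "ncD j (sg w c) = (\<Sum>k<length w. if w!k = j then sg (cutw w k) c else 0)"
    by (simp add: ncD_single Dw_def)
  have C: "sg (cutw w k) (of_nat (length w - 1) * c) + sg (cutw w k) c = sg (cutw w k) (of_nat (length w) * c)"
    if "k < length w" for k
  proof -
    have "of_nat (length w - 1) * c + c = of_nat (length w) * c"
      using that by (simp add: of_nat_diff algebra_simps)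
    then show ?thesis by (simp add: single_add[symmetric])
  qed
  show ?thesis
    apply (subst A, subst B)
    apply (simp only: sum_negf[symmetric] sum_subtractf[symmetric])
    apply (rule sum.cong[OF refl])
    subgoal for k using C[of k] by (auto simp: algebra_simps)
    done
qed

lemma lin_if0: "lin F (if P then x else 0) = (if P then lin F x else 0)" by simp

lemma ncD_diff: "ncD j (p - q) = ncD j p - ncD j q"
  by (simp add: ncD_lin lin_diff[OF addi_Dw])

lemma L2_word:
  assumes w: "set w \<subseteq> {..<n}"
  shows "ncD j (tauE (\<Sum>i<n. ncpartial i (ncD i (sg w c))) - ncN (sg w c)) =
    (\<Sum>k<length w. if w!k = j then (\<Sum>p<length w - 1. corr1 (cutw w k) p c + corr2 (cutw w k) p c)
        - sg (cutw w k) (of_nat (length w) * c) else 0)"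
proof -
  have a: "(\<Sum>i<n. ncpartial i (ncD i (sg w c))) = (\<Sum>l<length w. Pw (w!l) (cutw w l) c)"
  proof -
    have "(\<Sum>i<n. ncpartial i (ncD i (sg w c))) = (\<Sum>i<n. \<Sum>l<length w. if w!l = i then Pw i (cutw w l) c else 0)"
      by (simp add: ncD_single ncpartial_Dw cong: if_cong)
    also have "\<dots> = (\<Sum>l<length w. \<Sum>i<n. if w!l = i then Pw i (cutw w l) c else 0)" by (rule sum.swap)
    also have "\<dots> = (\<Sum>l<length w. Pw (w!l) (cutw w l) c)"
    proof (rule sum.cong[OF refl])
      fix l assume "l \<in> {..<length w}"
      then have "w!l < n" using w nth_mem by fastforce
      then show "(\<Sum>i<n. if w!l = i then Pw i (cutw w l) c else 0) = Pw (w!l) (cutw w l) c" by (simp add: sum.delta)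
    qed
    finally show ?thesis .
  qed
  have D1: "ncD j (tEw (u, v) e) = Dw j u (e * of_nat (sc_moment v)) + Dw j v (of_nat (sc_moment u) * e)" for u v e
    by (simp add: tEw_def ncD_lin lin_add[OF addi_Dw] lin_single[OF addi_Dw])
  have b: "ncD j (tauE (\<Sum>i<n. ncpartial i (ncD i (sg w c)))) =
     (\<Sum>l<length w. \<Sum>p'<length w - 1. if cutw w l ! p' = w!l then
            Dw j (take p' (cutw w l)) (c * of_nat (sc_moment (drop (Suc p') (cutw w l)))) else 0)
   + (\<Sum>l<length w. \<Sum>p'<length w - 1. if cutw w l ! p' = w!l then
            Dw j (drop (Suc p') (cutw w l)) (of_nat (sc_moment (take p' (cutw w l))) * c) else 0)"
  proof -
    have "ncD j (tauE (\<Sum>i<n. ncpartial i (ncD i (sg w c)))) =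
      (\<Sum>l<length w. \<Sum>p'<length (cutw w l). if cutw w l ! p' = w!l then
          ncD j (tEw (take p' (cutw w l), drop (Suc p') (cutw w l)) c) else 0)"
      unfolding a tauE_lin Pw_def
      by (simp add: lin_sum[OF addi_tEw] lin_sum_if_single[OF addi_tEw] ncD_lin lin_sum[OF addi_Dw]
          lin_sum_if[OF addi_Dw] lin_if0 lin_single[OF addi_tEw] cong: if_cong)
    also have "\<dots> = (\<Sum>l<length w. \<Sum>p'<length w - 1. (if cutw w l ! p' = w!l then
            Dw j (take p' (cutw w l)) (c * of_nat (sc_moment (drop (Suc p') (cutw w l)))) else 0)
          + (if cutw w l ! p' = w!l then
            Dw j (drop (Suc p') (cutw w l)) (of_nat (sc_moment (take p' (cutw w l))) * c) else 0))"
      by (intro sum.cong refl) (simp_all add: length_cut D1)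
    finally show ?thesis by (simp add: sum.distrib)
  qed
  have c: "ncD j (ncN (sg w c)) = (\<Sum>k<length w. if w!k = j then sg (cutw w k) (of_nat (length w) * c) else 0)"
    by (simp add: ncN_lin lin_single[OF addi_Nw] Nw_def ncD_single Dw_def)
  have pw: "(if w!k = j then (\<Sum>p<length w - 1. corr1 (cutw w k) p c + corr2 (cutw w k) p c)
        - sg (cutw w k) (of_nat (length w) * c) else 0) =
      (if w!k = j then (\<Sum>p<length w - 1. corr1 (cutw w k) p c) else 0)
      + (if w!k = j then (\<Sum>p<length w - 1. corr2 (cutw w k) p c) else 0)
      - (if w!k = j then sg (cutw w k) (of_nat (length w) * c) else 0)" for k
    by (simp add: sum.distrib)
  show ?thesis
    unfolding ncD_diff b c W1[symmetric] W2[symmetric] pw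
    by (simp only: sum.distrib sum_subtractf)
qed



lemma cyc_rotate1: assumes "cyc_symm g" shows "lk g (rotate1 v) = lk g v"
proof (cases v)
  case (Cons x xs)
  have "rotate1 v \<noteq> []" using Cons by simp
  then have "lk g (rotate1 v) = lk g (last (rotate1 v) # butlast (rotate1 v))"
    using assms unfolding cyc_symm_def by blast
  also have "last (rotate1 v) # butlast (rotate1 v) = v" using Cons by simp
  finally show ?thesis .
qed simp

lemma cyc_rotate: assumes "cyc_symm g" shows "lk g (rotate k v) = lk g v"
  by (induction k) (simp_all add: cyc_rotate1[OF assms])

lemma ncmult_var: "ncmult p (sg y 1) = lin (\<lambda>u c. sg (u @ y) c) p"
proof -
  have a: "addi (\<lambda>v d. sg (u @ v) (c * d))" for u c
    by (rule addiI) (simp add: single_add algebra_simps)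
  show ?thesis unfolding ncmult_lin by (simp add: lin_single[OF a])
qed

lemma addi_app: "addi (\<lambda>u c. sg (u @ y) c)"
  by (rule addiI) (simp add: single_add)

lemma cut_app: "k < length w \<Longrightarrow> cutw w k @ [w!k] = rotate (Suc k) w"
proof -
  assume k: "k < length w"
  have "cutw w k @ [w!k] = drop (Suc k) w @ take (Suc k) w"
    using k by (simp add: cutw_def take_Suc_conv_app_nth)
  also have "\<dots> = rotate (Suc k) w"
  proof (cases "Suc k = length w")
    case True then show ?thesis by simp
  next
    case False
    then have "Suc k mod length w = Suc k" using k by simp
    then show ?thesis by (simp add: rotate_drop_take)
  qed
  finally show ?thesis .
qed

lemma sum_rot_shift: "(\<Sum>k<length w. sg (rotate (Suc k) w) c) = (\<Sum>k<length w. sg (rotate k w) c)"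
proof -
  have "(\<Sum>k<Suc (length w). sg (rotate k w) c) = sg (rotate 0 w) c + (\<Sum>k<length w. sg (rotate (Suc k) w) c)"
    by (rule sum.lessThan_Suc_shift)
  moreover have "(\<Sum>k<Suc (length w). sg (rotate k w) c) = (\<Sum>k<length w. sg (rotate k w) c) + sg (rotate (length w) w) c"
    by simp
  ultimately show ?thesis by (simp add: add.commute)
qed

lemma nchash_word:
  assumes "set w \<subseteq> {..<n}"
  shows "(\<Sum>i<n. lin (\<lambda>u c. sg (u @ [i]) c) (Dw i w c)) = (\<Sum>k<length w. sg (rotate k w) c)"
proof -
  have "(\<Sum>i<n. lin (\<lambda>u c. sg (u @ [i]) c) (Dw i w c)) =
      (\<Sum>i<n. \<Sum>k<length w. if w!k = i then sg (cutw w k @ [i]) c else 0)"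
    unfolding Dw_def by (simp add: lin_sum_if_single[OF addi_app])
  also have "\<dots> = (\<Sum>k<length w. \<Sum>i<n. if w!k = i then sg (cutw w k @ [i]) c else 0)" by (rule sum.swap)
  also have "\<dots> = (\<Sum>k<length w. sg (rotate (Suc k) w) c)"
  proof (rule sum.cong[OF refl])
    fix k assume k: "k \<in> {..<length w}"
    then have "w!k < n" using assms nth_mem by fastforce
    then show "(\<Sum>i<n. if w!k = i then sg (cutw w k @ [i]) c else 0) = sg (rotate (Suc k) w) c"
      using k by (simp add: sum.delta cut_app)
  qed
  finally show ?thesis using sum_rot_shift[of w c] by (rule trans)
qed

lemma nchash_eq:
  assumes g: "g \<in> ncpolys n" and cs: "cyc_symm g" and f: "\<And>i. i < n \<Longrightarrow> f i = ncD i g"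
  shows "nchash n f ncvar = ncN g"
proof -
  have "nchash n f ncvar = (\<Sum>i<n. lin (\<lambda>u c. sg (u @ [i]) c) (lin (Dw i) g))"
    unfolding nchash_def ncvar_def by (simp add: f ncmult_var ncD_lin)
  also have "\<dots> = lin (\<lambda>w c. \<Sum>i<n. lin (\<lambda>u c. sg (u @ [i]) c) (Dw i w c)) g"
    by (simp add: lin_comp[OF addi_app] lin_fun_sum)
  also have "\<dots> = lin (\<lambda>w c. \<Sum>k<length w. sg (rotate k w) c) g"
  proof (rule lin_cong)
    fix w c assume "w \<in> ks g"
    then have "set w \<subseteq> {..<n}" using g by (auto simp: ncpolys_def)
    then show "(\<Sum>i<n. lin (\<lambda>u c. sg (u @ [i]) c) (Dw i w c)) = (\<Sum>k<length w. sg (rotate k w) c)"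
      by (rule nchash_word)
  qed
  also have "\<dots> = (\<Sum>(w,k)\<in>(SIGMA w:ks g. {..<length w}). sg (rotate k w) (lk g w))"
    unfolding lin_def by (rule sum.Sigma) auto
  also have "\<dots> = (\<Sum>(z,k)\<in>(SIGMA w:ks g. {..<length w}). sg z (lk g z))"
  proof (rule sum.reindex_bij_witness[where j = "\<lambda>(w,k). (rotate k w, k)" and i = "\<lambda>(z,k). (rotate (length z - k) z, k)"])
    fix a assume "a \<in> (SIGMA w:ks g. {..<length w})"
    then obtain w k where a: "a = (w, k)" and r: "w \<in> ks g" "k < length w" by auto
    have "rotate (length w - k) (rotate k w) = w"
      using r by (simp add: rotate_rotate)
    then show "(case (case a of (w, k) \<Rightarrow> (rotate k w, k)) of (z, k) \<Rightarrow> (rotate (length z - k) z, k)) = a"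
      by (simp add: a)
    have "lk g (rotate k w) = lk g w" by (rule cyc_rotate[OF cs])
    then have "rotate k w \<in> ks g" using r by (simp add: in_keys_iff)
    then show "(case a of (w, k) \<Rightarrow> (rotate k w, k)) \<in> (SIGMA w:ks g. {..<length w})" using r by (simp add: a)
    show "(case (case a of (w, k) \<Rightarrow> (rotate k w, k)) of (z, k) \<Rightarrow> sg z (lk g z)) = (case a of (w, k) \<Rightarrow> sg (rotate k w) (lk g w))"
      using cyc_rotate[OF cs, of k w] by (simp add: a)
  next
    fix b assume "b \<in> (SIGMA w:ks g. {..<length w})"
    then obtain z k where b: "b = (z, k)" and r: "z \<in> ks g" "k < length z" by auto
    have "rotate k (rotate (length z - k) z) = z"
      using r by (simp add: rotate_rotate)
    then show "(case (case b of (z, k) \<Rightarrow> (rotate (length z - k) z, k)) of (w, k) \<Rightarrow> (rotate k w, k)) = b"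
      by (simp add: b)
    have "lk g (rotate (length z - k) z) = lk g z" by (rule cyc_rotate[OF cs])
    then have "rotate (length z - k) z \<in> ks g" using r by (simp add: in_keys_iff)
    then show "(case b of (z, k) \<Rightarrow> (rotate (length z - k) z, k)) \<in> (SIGMA w:ks g. {..<length w})" using r by (simp add: b)
  qed
  also have "\<dots> = (\<Sum>z\<in>ks g. \<Sum>k<length z. sg z (lk g z))"
    by (rule sum.Sigma[symmetric]) auto
  also have "\<dots> = ncN g"
    unfolding ncN_def by (simp add: sum_single_const)
  finally show ?thesis .
qed



lemma ncD_add: "ncD j (a + b) = ncD j a + ncD j b" by (simp add: ncD_lin lin_add[OF addi_Dw])
lemma ncpartial_add: "ncpartial j (a + b) = ncpartial j a + ncpartial j b" by (simp add: ncpartial_lin lin_add[OF addi_Pw])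
lemma adjF_add: "adjF j (a + b) = adjF j a + adjF j b" by (simp add: adjF_def lin_add[OF addi_adjA])
lemma tauE_add: "tauE (a + b) = tauE a + tauE b" by (simp add: tauE_lin lin_add[OF addi_tEw])
lemma ncN_add: "ncN (a + b) = ncN a + ncN b" by (simp add: ncN_lin lin_add[OF addi_Nw])
lemma ncD_0: "ncD j 0 = 0" by (simp add: ncD_lin)
lemma ncpartial_0: "ncpartial j 0 = 0" by (simp add: ncpartial_lin)
lemma adjF_0: "adjF j 0 = 0" by (simp add: adjF_def)
lemma tauE_0: "tauE 0 = 0" by (simp add: tauE_lin)
lemma ncN_0: "ncN 0 = 0" by (simp add: ncN_lin)

lemma ncD_good: assumes "g \<in> supp (good n)" shows "ncD j g \<in> supp (good n)"
  unfolding ncD_lin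
proof (rule supp_lin)
  fix w c assume "w \<in> ks g"
  then have w: "set w \<subseteq> {..<n}" using supp_keys[OF assms] by (simp add: good_def)
  show "Dw j w c \<in> supp (good n)"
    unfolding Dw_def using w set_cut[of w]
    by (intro supp_sum supp_if supp_single) (auto simp: good_def)
qed

lemma ncpartial_good: assumes "g \<in> supp (good n)" shows "ncpartial j g \<in> supp (tgood n)"
  unfolding ncpartial_lin
proof (rule supp_lin)
  fix w c assume "w \<in> ks g"
  then have w: "set w \<subseteq> {..<n}" using supp_keys[OF assms] by (simp add: good_def)
  show "Pw j w c \<in> supp (tgood n)"
    unfolding Pw_def using w
    by (intro supp_sum supp_if supp_single)
       (auto simp: tgood_def subset_iff dest: in_set_takeD in_set_dropD)
qed

lemma L1_eq_L2:
  assumes g: "g \<in> ncpolys n"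
  shows "- (\<Sum>i<n. adjF i (ncpartial i (ncD j g))) - ncD j g = ncD j (tauE (\<Sum>i<n. ncpartial i (ncD i g)) - ncN g)"
proof -
  define L1 where "L1 g = - (\<Sum>i<n. adjF i (ncpartial i (ncD j g))) - ncD j g" for g
  define L2 where "L2 g = ncD j (tauE (\<Sum>i<n. ncpartial i (ncD i g)) - ncN g)" for g
  have e1: "L1 g = lin (\<lambda>w c. L1 (sg w c)) g"
    by (rule lin_expand) (simp_all add: L1_def ncD_add ncpartial_add adjF_add sum.distrib ncD_0 ncpartial_0 adjF_0)
  have e2: "L2 g = lin (\<lambda>w c. L2 (sg w c)) g"
    by (rule lin_expand) (simp_all add: L2_def ncD_add ncpartial_add tauE_add ncN_add sum.distrib ncD_0 ncpartial_0
        tauE_0 ncN_0 ncD_diff)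
  have "L1 g = L2 g"
    unfolding e1 e2
  proof (rule lin_cong)
    fix w c assume "w \<in> ks g"
    then have w: "set w \<subseteq> {..<n}" using g by (auto simp: ncpolys_def)
    show "L1 (sg w c) = L2 (sg w c)" unfolding L1_def L2_def L1_word[OF w] L2_word[OF w] ..
  qed
  then show ?thesis by (simp add: L1_def L2_def)
qed

theorem mainTheorem6:
  fixes n :: nat and g :: ncpoly and f :: "nat \<Rightarrow> ncpoly"
  assumes "g \<in> ncpolys n"
    and "cyc_symm g"
    and "\<And>i. i < n \<Longrightarrow> f i = ncD i g"
  shows "\<forall>j<n.
      ncK n f j = ncD j (tauE (\<Sum>i<n. ncJ f i i) - nchash n f ncvar)
    \<and> ncD j (tauE (\<Sum>i<n. ncJ f i i) - nchash n f ncvar)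
        = ncD j (tauE (ncTr n (ncJ (\<lambda>i. ncD i g))) - ncN g)"
proof (intro allI impI)
  fix j assume j: "j < n"
  have h: "nchash n f ncvar = ncN g" by (rule nchash_eq[OF assms])
  have tr: "(\<Sum>i<n. ncJ f i i) = (\<Sum>i<n. ncpartial i (ncD i g))"
    by (rule sum.cong) (simp_all add: ncJ_def assms(3))
  have tr2: "ncTr n (ncJ (\<lambda>i. ncD i g)) = (\<Sum>i<n. ncpartial i (ncD i g))"
    by (simp add: ncTr_def ncJ_def)
  have gs: "g \<in> supp (good n)" using assms(1) by (simp add: ncpolys_supp)
  have K: "ncK n f j = - (\<Sum>i<n. adjF i (ncpartial i (ncD j g))) - ncD j g"
  proof -
    have "ncJadj n (ncJ f) j = (\<Sum>i<n. adjF i (ncpartial i (ncD j g)))"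
      unfolding ncJadj_def ncJ_def assms(3)[OF j]
      by (rule sum.cong[OF refl], rule partial_adj_eq) (auto intro: ncpartial_good ncD_good gs)
    then show ?thesis by (simp add: ncK_def assms(3)[OF j])
  qed
  show "ncK n f j = ncD j (tauE (\<Sum>i<n. ncJ f i i) - nchash n f ncvar)
    \<and> ncD j (tauE (\<Sum>i<n. ncJ f i i) - nchash n f ncvar)
        = ncD j (tauE (ncTr n (ncJ (\<lambda>i. ncD i g))) - ncN g)"
    unfolding K h tr tr2 using L1_eq_L2[OF assms(1)] by simp
qed

end
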